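(* Let $\mathcal X,\mathcal Y$ be finite or countably infinite, $n\in\mathbb N$, and for $i=1,\dots,n$ let $P_{X_i},Q_{X_i}$ be probability mass functions with full support on $\mathcal X$ and $W_{Y_i|X_i}$ stochastic transformations from $\mathcal X$ to $\mathcal Y$. Let $P_{X^n}=\prod_iP_{X_i}$, $Q_{X^n}=\prod_iQ_{X_i}$, $W_{Y^n|X^n}(\underline y|\underline x)=\prod_iW_{Y_i|X_i}(y_i|x_i)$, and for $\lambda\in[0,1]$ let $R^{(\lambda)}_{X^n}(\underline x)=\prod_{i=1}^n(\lambda P_{X_i}(x_i)+(1-\lambda)Q_{X_i}(x_i))$. Let $R_{Y^n}^{(\lambda)}:=R_{X^n}^{(\lambda)}W_{Y^n|X^n}$, $Q_{Y^n}:=Q_{X^n}W_{Y^n|X^n}$, $P_{Y_i}:=P_{X_i}W_{Y_i|X_i}$, $Q_{Y_i}:=Q_{X_i}W_{Y_i|X_i}$. Let $f:(0,\infty)\to\mathbb R$ be convex and twice differentiable with $f(1)=0$, and let $$\xi_1(n,\lambda):=\prod_{i=1}^n\Big(1-\lambda+\lambda\inf_{x}\tfrac{P_{X_i}(x)}{Q_{X_i}(x)}\Big),\qquad \xi_2(n,\lambda):=\prod_{i=1}^n\Big(1-\lambda+\lambda\sup_x\tfrac{P_{X_i}(x)}{Q_{X_i}(x)}\Big).$$ Then: (a) for all $\lambda\in[0,1]$, $$D_f(R^{(\lambda)}_{X^n}\|Q_{X^n})-D_f(R^{(\lambda)}_{Y^n}\|Q_{Y^n})\ge c_f(\xi_1(n,\lambda),\xi_2(n,\lambda))\Big[\prod_{i=1}^n(1+\lambda^2\chi^2(P_{X_i}\|Q_{X_i}))-\prod_{i=1}^n(1+\lambda^2\chi^2(P_{Y_i}\|Q_{Y_i}))\Big]$$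 $$\ge c_f(\xi_1(n,\lambda),\xi_2(n,\lambda))\,\lambda^2\sum_{i=1}^n[\chi^2(P_{X_i}\|Q_{X_i})-\chi^2(P_{Y_i}\|Q_{Y_i})]\ge0;$$ (b) for all $\lambda\in[0,1]$, $$D_f(R^{(\lambda)}_{X^n}\|Q_{X^n})-D_f(R^{(\lambda)}_{Y^n}\|Q_{Y^n})\le e_f(\xi_1(n,\lambda),\xi_2(n,\lambda))\Big[\prod_{i=1}^n(1+\lambda^2\chi^2(P_{X_i}\|Q_{X_i}))-\prod_{i=1}^n(1+\lambda^2\chi^2(P_{Y_i}\|Q_{Y_i}))\Big];$$ (c) if $f$ has a continuous second derivative at $1$ and $\sup_x P_{X_i}(x)/Q_{X_i}(x)<\infty$ for all $i$, then $$\lim_{\lambda\to0^+}\frac{D_f(R^{(\lambda)}_{X^n}\|Q_{X^n})-D_f(R^{(\lambda)}_{Y^n}\|Q_{Y^n})}{\lambda^2}=\tfrac12f''(1)\sum_{i=1}^n[\chi^2(P_{X_i}\|Q_{X_i})-\chi^2(P_{Y_i}\|Q_{Y_i})],$$ and the lower bounds in (a) and the upper bound in (b), divided by $\lambda^2$, also converge to this limit as $\lambda\to0^+$.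
   Context: $D_f(P\|Q):=\sum_xQ(x)f(P(x)/Q(x))$ is the $f$-divergence and $\chi^2(P\|Q):=\sum_x(P(x)-Q(x))^2/Q(x)$. For $\xi_1\le1\le\xi_2$, with $\mathcal I(\xi_1,\xi_2):=[\xi_1,\xi_2]\cap(0,\infty)$, define $c_f(\xi_1,\xi_2):=\tfrac12\inf_{t\in\mathcal I(\xi_1,\xi_2)}f''(t)$ and $e_f(\xi_1,\xi_2):=\tfrac12\sup_{t\in\mathcal I(\xi_1,\xi_2)}f''(t)$. *)

theory Defs
  imports "HOL-Analysis.Analysis"
begin

definition is_pmf :: "('a \<Rightarrow> real) \<Rightarrow> bool" where
  "is_pmf P \<longleftrightarrow> (\<forall>x. 0 \<le> P x) \<and> (P has_sum 1) UNIV"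

text \<open>f-divergence and chi-square divergence over a (countable) support set A.
  Terms with Q x = 0 contribute 0 (then also P x = 0 in all uses).\<close>
definition fdiv :: "(real \<Rightarrow> real) \<Rightarrow> ('a \<Rightarrow> real) \<Rightarrow> ('a \<Rightarrow> real) \<Rightarrow> 'a set \<Rightarrow> real" where
  "fdiv f P Q A = (\<Sum>\<^sub>\<infinity>x\<in>A. Q x * f (P x / Q x))"

definition chi2 :: "('a \<Rightarrow> real) \<Rightarrow> ('a \<Rightarrow> real) \<Rightarrow> 'a set \<Rightarrow> real" where
  "chi2 P Q A = (\<Sum>\<^sub>\<infinity>x\<in>A. (P x - Q x)\<^sup>2 / Q x)"

definition chan_out :: "('a \<Rightarrow> real) \<Rightarrow> ('a \<Rightarrow> 'b \<Rightarrow> real) \<Rightarrow> 'a set \<Rightarrow> 'b \<Rightarrow> real" where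
  "chan_out P W A = (\<lambda>y. \<Sum>\<^sub>\<infinity>x\<in>A. P x * W x y)"

text \<open>Sequences of length n (indices 0..n-1 stand for 1..n).\<close>
definition seqs :: "nat \<Rightarrow> 'a list set" where
  "seqs n = {xs. length xs = n}"

definition prodX :: "nat \<Rightarrow> (nat \<Rightarrow> 'a \<Rightarrow> real) \<Rightarrow> 'a list \<Rightarrow> real" where
  "prodX n P = (\<lambda>xs. \<Prod>i<n. P i (xs ! i))"

definition chanN :: "nat \<Rightarrow> (nat \<Rightarrow> 'a \<Rightarrow> 'b \<Rightarrow> real) \<Rightarrow> 'a list \<Rightarrow> 'b list \<Rightarrow> real" where
  "chanN n W = (\<lambda>xs ys. \<Prod>i<n. W i (xs ! i) (ys ! i))"

definition Rlam :: "nat \<Rightarrow> real \<Rightarrow> (nat \<Rightarrow> 'a \<Rightarrow> real) \<Rightarrow> (nat \<Rightarrow> 'a \<Rightarrow> real) \<Rightarrow> 'a list \<Rightarrow> real" where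
  "Rlam n l P Q = (\<lambda>xs. \<Prod>i<n. l * P i (xs ! i) + (1 - l) * Q i (xs ! i))"

definition deriv2 :: "(real \<Rightarrow> real) \<Rightarrow> real \<Rightarrow> real" where
  "deriv2 f = deriv (deriv f)"

text \<open>xi_1 (a real, since the infimum of positive ratios is finite) and xi_2 (extended real,
  since the supremum may be infinite).\<close>
definition xi1 :: "nat \<Rightarrow> real \<Rightarrow> (nat \<Rightarrow> 'a \<Rightarrow> real) \<Rightarrow> (nat \<Rightarrow> 'a \<Rightarrow> real) \<Rightarrow> ereal" where
  "xi1 n l P Q = ereal (\<Prod>i<n. 1 - l + l * (INF x. P i x / Q i x))"

definition xi2 :: "nat \<Rightarrow> real \<Rightarrow> (nat \<Rightarrow> 'a \<Rightarrow> real) \<Rightarrow> (nat \<Rightarrow> 'a \<Rightarrow> real) \<Rightarrow> ereal" where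
  "xi2 n l P Q = (\<Prod>i<n. ereal (1 - l) + ereal l * (SUP x. ereal (P i x / Q i x)))"

definition Ival :: "ereal \<Rightarrow> ereal \<Rightarrow> real set" where
  "Ival a b = {t. 0 < t \<and> a \<le> ereal t \<and> ereal t \<le> b}"

definition c_f :: "(real \<Rightarrow> real) \<Rightarrow> ereal \<Rightarrow> ereal \<Rightarrow> real" where
  "c_f f a b = (1/2) * (INF t\<in>Ival a b. deriv2 f t)"

definition e_f :: "(real \<Rightarrow> real) \<Rightarrow> ereal \<Rightarrow> ereal \<Rightarrow> ereal" where
  "e_f f a b = ereal (1/2) * (SUP t\<in>Ival a b. ereal (deriv2 f t))"

definition Dgap :: "(real \<Rightarrow> real) \<Rightarrow> nat \<Rightarrow> real \<Rightarrow> (nat \<Rightarrow> 'a \<Rightarrow> real) \<Rightarrow> (nat \<Rightarrow> 'a \<Rightarrow> real)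
    \<Rightarrow> (nat \<Rightarrow> 'a \<Rightarrow> 'b \<Rightarrow> real) \<Rightarrow> real" where
  "Dgap f n l P Q W =
     fdiv f (Rlam n l P Q) (prodX n Q) (seqs n)
     - fdiv f (chan_out (Rlam n l P Q) (chanN n W) (seqs n))
              (chan_out (prodX n Q) (chanN n W) (seqs n)) (seqs n)"

definition chi_bracket :: "nat \<Rightarrow> real \<Rightarrow> (nat \<Rightarrow> 'a \<Rightarrow> real) \<Rightarrow> (nat \<Rightarrow> 'a \<Rightarrow> real)
    \<Rightarrow> (nat \<Rightarrow> 'a \<Rightarrow> 'b \<Rightarrow> real) \<Rightarrow> real" where
  "chi_bracket n l P Q W =
     (\<Prod>i<n. 1 + l\<^sup>2 * chi2 (P i) (Q i) UNIV)
     - (\<Prod>i<n. 1 + l\<^sup>2 * chi2 (chan_out (P i) (W i) UNIV) (chan_out (Q i) (W i) UNIV) UNIV)"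

definition chi_sum :: "nat \<Rightarrow> (nat \<Rightarrow> 'a \<Rightarrow> real) \<Rightarrow> (nat \<Rightarrow> 'a \<Rightarrow> real)
    \<Rightarrow> (nat \<Rightarrow> 'a \<Rightarrow> 'b \<Rightarrow> real) \<Rightarrow> real" where
  "chi_sum n P Q W =
     (\<Sum>i<n. chi2 (P i) (Q i) UNIV
              - chi2 (chan_out (P i) (W i) UNIV) (chan_out (Q i) (W i) UNIV) UNIV)"

end

theory Submission
  imports Defs
begin

lemma seqs_Suc_bij:
  "bij_betw (\<lambda>(x,xs). x # xs) (UNIV \<times> seqs n) (seqs (Suc n))"
  unfolding seqs_def
  by (rule bij_betwI[of _ _ _ "\<lambda>xs. (hd xs, tl xs)"]) (auto simp: length_Suc_conv)

lemma prod_has_sum: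
  fixes h :: "nat \<Rightarrow> 'a \<Rightarrow> real"
  assumes "\<And>i. i < n \<Longrightarrow> (h i has_sum s i) UNIV"
    and "\<And>i x. i < n \<Longrightarrow> 0 \<le> h i x"
  shows "((\<lambda>xs. \<Prod>i<n. h i (xs ! i)) has_sum (\<Prod>i<n. s i)) (seqs n)"
  using assms
proof (induction n arbitrary: h s)
  case 0
  have e: "seqs 0 = {[]}" by (auto simp: seqs_def)
  show ?case unfolding e using has_sum_finite[of "{[]}" "\<lambda>xs. 1::real"] by simp
next
  case (Suc n)
  define H where "H = (\<lambda>xs. \<Prod>i<n. h (Suc i) (xs ! i))"
  define S where "S = (\<Prod>i<n. s (Suc i))"
  have IH: "(H has_sum S) (seqs n)" unfolding H_def S_def
    by (rule Suc.IH) (use Suc.prems in auto)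
  have Hnn: "H xs \<ge> 0" for xs unfolding H_def by (intro prod_nonneg) (use Suc.prems in auto)
  define F where "F = (\<lambda>(x, xs). h 0 x * H xs)"
  have inner: "((\<lambda>xs. F (x, xs)) has_sum h 0 x * S) (seqs n)" for x
    unfolding F_def using has_sum_cmult_right[OF IH] by simp
  have outer: "((\<lambda>x. h 0 x * S) has_sum s 0 * S) UNIV"
    using has_sum_cmult_left[OF Suc.prems(1)[of 0]] by simp
  have summ: "F summable_on Sigma UNIV (\<lambda>_. seqs n)"
    by (rule summable_on_SigmaI[OF inner]) (use outer has_sum_imp_summable Suc.prems Hnn in \<open>auto simp: F_def\<close>)
  have "(F has_sum s 0 * S) (UNIV \<times> seqs n)"
    by (rule has_sum_SigmaI[OF inner outer summ])
  then have "((\<lambda>xs. \<Prod>i<Suc n. h i (xs ! i)) has_sum s 0 * S) (seqs (Suc n))"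
    apply (subst has_sum_reindex_bij_betw[OF seqs_Suc_bij, symmetric])
    apply (erule has_sum_cong[THEN iffD1, rotated])
    by (auto simp del: prod.lessThan_Suc simp add: F_def H_def prod.lessThan_Suc_shift)
  then show ?case by (simp del: prod.lessThan_Suc add: S_def prod.lessThan_Suc_shift)
qed

lemma has_sum_diff':
  fixes f g :: "'a \<Rightarrow> real"
  assumes "(f has_sum a) A" "(g has_sum b) A"
  shows "((\<lambda>x. f x - g x) has_sum (a - b)) A"
  using has_sum_add[OF assms(1) has_sum_cmult_right[OF assms(2), of "-1"]] by simp

lemma le_has_sum:
  fixes f :: "'a \<Rightarrow> real"
  assumes "(f has_sum s) A" "\<And>x. x \<in> A \<Longrightarrow> 0 \<le> f x" "x \<in> A"
  shows "f x \<le> s"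
proof -
  have "(f has_sum f x) {x}" using has_sum_finite[of "{x}" f] by simp
  from has_sum_mono_neutral[OF this assms(1)] show ?thesis using assms by auto
qed

lemma W_le1:
  fixes W :: "'a \<Rightarrow> 'b \<Rightarrow> real"
  assumes "(W a has_sum 1) B" "\<And>b. b \<in> B \<Longrightarrow> 0 \<le> W a b" "b \<in> B"
  shows "W a b \<le> 1"
  using le_has_sum[OF assms] .

lemma chan_slice_has_sum:
  fixes p :: "'a \<Rightarrow> real" and W :: "'a \<Rightarrow> 'b \<Rightarrow> real"
  assumes p: "p summable_on A" "\<And>a. a \<in> A \<Longrightarrow> 0 \<le> p a"
    and W: "\<And>a. a \<in> A \<Longrightarrow> (W a has_sum 1) B" "\<And>a b. a \<in> A \<Longrightarrow> b \<in> B \<Longrightarrow> 0 \<le> W a b"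
    and b: "b \<in> B"
  shows "((\<lambda>a. p a * W a b) has_sum chan_out p W A b) A"
proof -
  have "(\<lambda>a. p a * W a b) summable_on A"
  proof (rule summable_on_comparison_test[OF p(1)])
    fix a assume a: "a \<in> A"
    have "W a b \<le> 1" by (rule W_le1[of W a B, OF W(1)[OF a] W(2)[OF a] b])
    then show "p a * W a b \<le> p a" using p(2)[OF a] by (metis mult_left_le)
    show "0 \<le> p a * W a b" using p(2)[OF a] W(2)[OF a b] by simp
  qed
  then show ?thesis unfolding chan_out_def by (simp add: has_sum_infsum)
qed

lemma chan_out_has_sum:
  fixes p :: "'a \<Rightarrow> real" and W :: "'a \<Rightarrow> 'b \<Rightarrow> real"
  assumes p: "(p has_sum s) A" "\<And>a. a \<in> A \<Longrightarrow> 0 \<le> p a"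
    and W: "\<And>a. a \<in> A \<Longrightarrow> (W a has_sum 1) B" "\<And>a b. a \<in> A \<Longrightarrow> b \<in> B \<Longrightarrow> 0 \<le> W a b"
  shows "(chan_out p W A has_sum s) B"
proof -
  define F where "F = (\<lambda>(a, b). p a * W a b)"
  have inner: "((\<lambda>b. F (a, b)) has_sum p a) B" if "a \<in> A" for a
    unfolding F_def using has_sum_cmult_right[OF W(1)[OF that], of "p a"] by simp
  have summ: "F summable_on Sigma A (\<lambda>_. B)"
  proof (rule summable_on_SigmaI[OF inner])
    show "p summable_on A" using p(1) by (rule has_sum_imp_summable)
    show "0 \<le> F (x, y)" if "x \<in> A" "y \<in> B" for x y
      using p(2)[OF that(1)] W(2)[OF that] by (simp add: F_def)
  qed
  have "(F has_sum s) (A \<times> B)"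
    by (rule has_sum_SigmaI[OF inner p(1) summ])
  then have "((\<lambda>(x,y). F (y,x)) has_sum s) (B \<times> A)" by (rule has_sum_swap[THEN iffD1])
  then show ?thesis
  proof (rule has_sum_SigmaD)
    fix b assume b: "b \<in> B"
    show "((\<lambda>y. (\<lambda>(x, y). F (y, x)) (b, y)) has_sum chan_out p W A b) A"
      using chan_slice_has_sum[OF has_sum_imp_summable[OF p(1)] p(2) W b] by (simp add: F_def)
  qed
qed

lemma dpi_point:
  fixes q r :: "'a \<Rightarrow> real" and W :: "'a \<Rightarrow> 'b \<Rightarrow> real" and \<phi> d\<phi> :: "real \<Rightarrow> real"
  assumes q: "q summable_on A" "\<And>a. a \<in> A \<Longrightarrow> 0 < q a"
    and r: "r summable_on A"
    and W: "\<And>a. a \<in> A \<Longrightarrow> (W a has_sum 1) B" "\<And>a b. a \<in> A \<Longrightarrow> b \<in> B \<Longrightarrow> 0 \<le> W a b"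
    and I: "\<And>a. a \<in> A \<Longrightarrow> r a / q a \<in> Ival lo hi"
    and nn: "\<And>t. t \<in> Ival lo hi \<Longrightarrow> 0 \<le> \<phi> t"
    and tan: "\<And>m t. m \<in> Ival lo hi \<Longrightarrow> t \<in> Ival lo hi \<Longrightarrow> \<phi> m + d\<phi> m * (t - m) \<le> \<phi> t"
    and S: "(\<lambda>a. q a * \<phi> (r a / q a)) summable_on A"
    and b: "b \<in> B"
  shows "0 \<le> chan_out q W A b * \<phi> (chan_out r W A b / chan_out q W A b)
      \<and> chan_out q W A b * \<phi> (chan_out r W A b / chan_out q W A b)
          \<le> chan_out (\<lambda>a. q a * \<phi> (r a / q a)) W A b"
proof -
  define qy where "qy = chan_out q W A b"
  define ry where "ry = chan_out r W A b"
  define G where "G = chan_out (\<lambda>a. q a * \<phi> (r a / q a)) W A b"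
  have rpos: "0 < r a" if "a \<in> A" for a
  proof -
    have "0 < r a / q a" using I[OF that] by (simp add: Ival_def)
    then show ?thesis using q(2)[OF that] by (simp add: zero_less_divide_iff)
  qed
  have hq: "((\<lambda>a. q a * W a b) has_sum qy) A"
    unfolding qy_def by (rule chan_slice_has_sum[OF q(1) _ W b]) (use q(2) in force)
  have hr: "((\<lambda>a. r a * W a b) has_sum ry) A"
    unfolding ry_def by (rule chan_slice_has_sum[OF r _ W b]) (use rpos in force)
  have pnn: "0 \<le> q a * \<phi> (r a / q a)" if "a \<in> A" for a
    using q(2)[OF that] nn[OF I[OF that]] by simp
  have hG: "((\<lambda>a. q a * \<phi> (r a / q a) * W a b) has_sum G) A"
    unfolding G_def by (rule chan_slice_has_sum[OF S _ W b]) (rule pnn)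
  have qy0: "0 \<le> qy" by (rule has_sum_nonneg[OF hq]) (use q(2) W(2) b in force)
  have G0: "0 \<le> G" by (rule has_sum_nonneg[OF hG]) (use pnn W(2) b in force)
  show ?thesis
  proof (cases "qy = 0")
    case True
    then show ?thesis using G0 by (simp add: qy_def[symmetric] ry_def[symmetric] G_def[symmetric])
  next
    case False
    then have qypos: "0 < qy" using qy0 by simp
    have "\<exists>a0\<in>A. 0 < q a0 * W a0 b"
    proof (rule ccontr)
      assume nex: "\<not> (\<exists>a0\<in>A. 0 < q a0 * W a0 b)"
      have "q a * W a b = 0" if a: "a \<in> A" for a
      proof -
        have "0 \<le> q a * W a b" using q(2)[OF a] W(2)[OF a b] by simp
        moreover have "\<not> 0 < q a * W a b" using nex a by blast
        ultimately show ?thesis by linarith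
      qed
      then have "((\<lambda>a. q a * W a b) has_sum 0) A" by (simp add: has_sum_0)
      with hq have "qy = 0" using has_sum_unique by blast
      with False show False by simp
    qed
    then obtain a0 where a0: "a0 \<in> A" "0 < q a0 * W a0 b" by blast
    have Wa0: "0 < W a0 b" using a0 q(2)[OF a0(1)] by (simp add: zero_less_mult_iff)
    have "r a0 * W a0 b \<le> ry"
      by (rule le_has_sum[OF hr _ a0(1)]) (use rpos W(2) b a0 in \<open>meson less_imp_le mult_nonneg_nonneg\<close>)
    moreover have "0 < r a0 * W a0 b" using rpos[OF a0(1)] Wa0 by simp
    ultimately have rypos: "0 < ry" by simp
    define m where "m = ry / qy"
    have mpos: "0 < m" unfolding m_def using rypos qypos by simp
    have lo: "lo \<le> ereal m"
    proof (cases lo)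
      case (real c)
      have "c \<le> r a / q a" if "a \<in> A" for a using I[OF that] real by (simp add: Ival_def)
      then have cle: "c * q a \<le> r a" if "a \<in> A" for a using q(2)[OF that] that
        by (simp add: le_divide_eq)
      have "((\<lambda>a. c * (q a * W a b)) has_sum c * qy) A" by (rule has_sum_cmult_right[OF hq])
      then have "c * qy \<le> ry"
      proof (rule has_sum_mono[OF _ hr])
        fix a assume "a \<in> A"
        then show "c * (q a * W a b) \<le> r a * W a b"
          using mult_right_mono[OF cle[OF \<open>a \<in> A\<close>] W(2)[OF \<open>a \<in> A\<close> b]] by (simp add: mult.assoc)
      qed
      then show ?thesis using real qypos by (simp add: m_def le_divide_eq)
    next
      case PInf
      then show ?thesis using I[OF a0(1)] by (simp add: Ival_def)
    next
      case MInf then show ?thesis by simp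
    qed
    have hi: "ereal m \<le> hi"
    proof (cases hi)
      case (real c)
      have "r a / q a \<le> c" if "a \<in> A" for a using I[OF that] real by (simp add: Ival_def)
      then have cle: "r a \<le> c * q a" if "a \<in> A" for a using q(2)[OF that] that
        by (simp add: divide_le_eq)
      have "((\<lambda>a. c * (q a * W a b)) has_sum c * qy) A" by (rule has_sum_cmult_right[OF hq])
      have "ry \<le> c * qy"
      proof (rule has_sum_mono[OF hr \<open>((\<lambda>a. c * (q a * W a b)) has_sum c * qy) A\<close>])
        fix a assume "a \<in> A"
        then show "r a * W a b \<le> c * (q a * W a b)"
          using mult_right_mono[OF cle[OF \<open>a \<in> A\<close>] W(2)[OF \<open>a \<in> A\<close> b]] by (simp add: mult.assoc)
      qed
      then show ?thesis using real qypos by (simp add: m_def divide_le_eq mult.commute)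
    next
      case MInf
      then show ?thesis using I[OF a0(1)] by (simp add: Ival_def)
    next
      case PInf then show ?thesis by simp
    qed
    have mI: "m \<in> Ival lo hi" using mpos lo hi by (simp add: Ival_def)
    have L: "((\<lambda>a. \<phi> m * (q a * W a b) + d\<phi> m * (r a * W a b) - d\<phi> m * m * (q a * W a b))
        has_sum (\<phi> m * qy + d\<phi> m * ry - d\<phi> m * m * qy)) A"
      by (intro has_sum_diff' has_sum_add has_sum_cmult_right hq hr)
    have "\<phi> m * qy + d\<phi> m * ry - d\<phi> m * m * qy \<le> G"
    proof (rule has_sum_mono[OF L hG])
      fix a assume a: "a \<in> A"
      have t: "\<phi> m + d\<phi> m * (r a / q a - m) \<le> \<phi> (r a / q a)" by (rule tan[OF mI I[OF a]])
      have "0 \<le> q a * W a b" using q(2)[OF a] W(2)[OF a b] by simp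
      from mult_right_mono[OF t this]
      have "(\<phi> m + d\<phi> m * (r a / q a - m)) * (q a * W a b) \<le> \<phi> (r a / q a) * (q a * W a b)" .
      moreover have "(\<phi> m + d\<phi> m * (r a / q a - m)) * (q a * W a b)
          = \<phi> m * (q a * W a b) + d\<phi> m * (r a * W a b) - d\<phi> m * m * (q a * W a b)"
        using q(2)[OF a] by (simp add: field_simps)
      ultimately show "\<phi> m * (q a * W a b) + d\<phi> m * (r a * W a b) - d\<phi> m * m * (q a * W a b)
          \<le> q a * \<phi> (r a / q a) * W a b" by (simp add: mult_ac)
    qed
    moreover have "\<phi> m * qy + d\<phi> m * ry - d\<phi> m * m * qy = qy * \<phi> m"
      using qypos by (simp add: m_def field_simps)
    ultimately have "qy * \<phi> m \<le> G" by simp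
    moreover have "0 \<le> qy * \<phi> m" using qy0 nn[OF mI] by simp
    ultimately show ?thesis by (simp add: m_def qy_def ry_def G_def)
  qed
qed

lemma dpi:
  fixes q r :: "'a \<Rightarrow> real" and W :: "'a \<Rightarrow> 'b \<Rightarrow> real" and \<phi> d\<phi> :: "real \<Rightarrow> real"
  assumes q: "q summable_on A" "\<And>a. a \<in> A \<Longrightarrow> 0 < q a"
    and r: "r summable_on A"
    and W: "\<And>a. a \<in> A \<Longrightarrow> (W a has_sum 1) B" "\<And>a b. a \<in> A \<Longrightarrow> b \<in> B \<Longrightarrow> 0 \<le> W a b"
    and I: "\<And>a. a \<in> A \<Longrightarrow> r a / q a \<in> Ival lo hi"
    and nn: "\<And>t. t \<in> Ival lo hi \<Longrightarrow> 0 \<le> \<phi> t"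
    and tan: "\<And>m t. m \<in> Ival lo hi \<Longrightarrow> t \<in> Ival lo hi \<Longrightarrow> \<phi> m + d\<phi> m * (t - m) \<le> \<phi> t"
    and S: "(\<lambda>a. q a * \<phi> (r a / q a)) summable_on A"
  shows "(\<lambda>b. chan_out q W A b * \<phi> (chan_out r W A b / chan_out q W A b)) summable_on B"
    and "(\<Sum>\<^sub>\<infinity>b\<in>B. chan_out q W A b * \<phi> (chan_out r W A b / chan_out q W A b))
         \<le> (\<Sum>\<^sub>\<infinity>a\<in>A. q a * \<phi> (r a / q a))"
proof -
  have pnn: "0 \<le> q a * \<phi> (r a / q a)" if "a \<in> A" for a
    using q(2)[OF that] nn[OF I[OF that]] by simp
  have hG: "(chan_out (\<lambda>a. q a * \<phi> (r a / q a)) W A has_sum (\<Sum>\<^sub>\<infinity>a\<in>A. q a * \<phi> (r a / q a))) B"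
    by (rule chan_out_has_sum[OF has_sum_infsum[OF S] _ W]) (rule pnn)
  note pt0 = dpi_point[OF q r W I nn tan S]
  have pt: "0 \<le> chan_out q W A b * \<phi> (chan_out r W A b / chan_out q W A b)
      \<and> chan_out q W A b * \<phi> (chan_out r W A b / chan_out q W A b)
          \<le> chan_out (\<lambda>a. q a * \<phi> (r a / q a)) W A b" if "b \<in> B" for b
    by (rule pt0) (simp_all add: that)
  show 1: "(\<lambda>b. chan_out q W A b * \<phi> (chan_out r W A b / chan_out q W A b)) summable_on B"
  proof (rule summable_on_comparison_test[OF has_sum_imp_summable[OF hG]])
    show "chan_out q W A b * \<phi> (chan_out r W A b / chan_out q W A b)
        \<le> chan_out (\<lambda>a. q a * \<phi> (r a / q a)) W A b" if "b \<in> B" for b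
      using pt[OF that] by (rule conjunct2)
    show "0 \<le> chan_out q W A b * \<phi> (chan_out r W A b / chan_out q W A b)" if "b \<in> B" for b
      using pt[OF that] by (rule conjunct1)
  qed
  have "(\<Sum>\<^sub>\<infinity>b\<in>B. chan_out q W A b * \<phi> (chan_out r W A b / chan_out q W A b))
      \<le> (\<Sum>\<^sub>\<infinity>b\<in>B. chan_out (\<lambda>a. q a * \<phi> (r a / q a)) W A b)"
    by (rule infsum_mono[OF 1 has_sum_imp_summable[OF hG]]) (use pt in \<open>rule conjunct2\<close>)
  also have "\<dots> = (\<Sum>\<^sub>\<infinity>a\<in>A. q a * \<phi> (r a / q a))" by (rule infsumI[OF hG])
  finally show "(\<Sum>\<^sub>\<infinity>b\<in>B. chan_out q W A b * \<phi> (chan_out r W A b / chan_out q W A b))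
         \<le> (\<Sum>\<^sub>\<infinity>a\<in>A. q a * \<phi> (r a / q a))" .
qed

lemma Ival_between:
  assumes "x \<in> Ival lo hi" "y \<in> Ival lo hi" "x \<le> z" "z \<le> y"
  shows "z \<in> Ival lo hi"
proof -
  have "lo \<le> ereal x" "ereal y \<le> hi" "0 < x" using assms by (auto simp: Ival_def)
  moreover have "ereal x \<le> ereal z" "ereal z \<le> ereal y" using assms by auto
  ultimately show ?thesis unfolding Ival_def using order_trans by fastforce
qed

lemma mono_from_d2:
  fixes d\<phi> d2 :: "real \<Rightarrow> real"
  assumes der: "\<And>t. t \<in> Ival lo hi \<Longrightarrow> (d\<phi> has_real_derivative d2 t) (at t)"
    and nn: "\<And>t. t \<in> Ival lo hi \<Longrightarrow> 0 \<le> d2 t"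
    and xy: "x \<in> Ival lo hi" "y \<in> Ival lo hi" "x \<le> y"
  shows "d\<phi> x \<le> d\<phi> y"
proof (rule DERIV_nonneg_imp_nondecreasing[OF xy(3)])
  fix z assume "x \<le> z" "z \<le> y"
  then have "z \<in> Ival lo hi" using Ival_between xy by blast
  then show "\<exists>w. DERIV d\<phi> z :> w \<and> 0 \<le> w" using der nn by blast
qed

lemma tangent_from_d2:
  fixes \<phi> d\<phi> d2 :: "real \<Rightarrow> real"
  assumes der1: "\<And>t. t \<in> Ival lo hi \<Longrightarrow> (\<phi> has_real_derivative d\<phi> t) (at t)"
    and der: "\<And>t. t \<in> Ival lo hi \<Longrightarrow> (d\<phi> has_real_derivative d2 t) (at t)"
    and nn: "\<And>t. t \<in> Ival lo hi \<Longrightarrow> 0 \<le> d2 t"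
    and m: "m \<in> Ival lo hi" and t: "t \<in> Ival lo hi"
  shows "\<phi> m + d\<phi> m * (t - m) \<le> \<phi> t"
proof (cases t m rule: linorder_cases)
  case less
  have "\<exists>z. t < z \<and> z < m \<and> \<phi> m - \<phi> t = (m - t) * d\<phi> z"
    by (rule MVT2[OF less der1]) (use Ival_between m t in blast)
  then obtain z where z: "t < z" "z < m" "\<phi> m - \<phi> t = (m - t) * d\<phi> z" by blast
  have zI: "z \<in> Ival lo hi" using Ival_between[OF t m] z by simp
  have "d\<phi> z \<le> d\<phi> m" by (rule mono_from_d2[OF der nn zI m]) (use z in auto)
  then have "(m - t) * d\<phi> z \<le> (m - t) * d\<phi> m" using less by (simp add: mult_left_mono)
  then show ?thesis using z by (simp add: algebra_simps)
next
  case equal then show ?thesis by simp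
next
  case greater
  have "\<exists>z. m < z \<and> z < t \<and> \<phi> t - \<phi> m = (t - m) * d\<phi> z"
    by (rule MVT2[OF greater der1]) (use Ival_between m t in blast)
  then obtain z where z: "m < z" "z < t" "\<phi> t - \<phi> m = (t - m) * d\<phi> z" by blast
  have zI: "z \<in> Ival lo hi" using Ival_between[OF m t] z by simp
  have "d\<phi> m \<le> d\<phi> z" by (rule mono_from_d2[OF der nn m zI]) (use z in auto)
  then have "(t - m) * d\<phi> m \<le> (t - m) * d\<phi> z" using greater by (simp add: mult_left_mono)
  then show ?thesis using z by (simp add: algebra_simps)
qed

lemma nonneg_from_d2:
  fixes \<phi> d\<phi> d2 :: "real \<Rightarrow> real"
  assumes der1: "\<And>t. t \<in> Ival lo hi \<Longrightarrow> (\<phi> has_real_derivative d\<phi> t) (at t)"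
    and der: "\<And>t. t \<in> Ival lo hi \<Longrightarrow> (d\<phi> has_real_derivative d2 t) (at t)"
    and nn: "\<And>t. t \<in> Ival lo hi \<Longrightarrow> 0 \<le> d2 t"
    and one: "1 \<in> Ival lo hi" "\<phi> 1 = 0" "d\<phi> 1 = 0"
    and t: "t \<in> Ival lo hi"
  shows "0 \<le> \<phi> t"
  using tangent_from_d2[OF der1 der nn one(1) t] one by simp

lemma chan_zero:
  fixes q r :: "'a \<Rightarrow> real" and W :: "'a \<Rightarrow> 'b \<Rightarrow> real"
  assumes q: "q summable_on A" "\<And>a. a \<in> A \<Longrightarrow> 0 < q a"
    and r: "r summable_on A" "\<And>a. a \<in> A \<Longrightarrow> 0 \<le> r a"
    and W: "\<And>a. a \<in> A \<Longrightarrow> (W a has_sum 1) B" "\<And>a b. a \<in> A \<Longrightarrow> b \<in> B \<Longrightarrow> 0 \<le> W a b"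
    and b: "b \<in> B" and z: "chan_out q W A b = 0"
  shows "chan_out r W A b = 0"
proof -
  have hq0: "((\<lambda>a. q a * W a b) has_sum chan_out q W A b) A"
    by (rule chan_slice_has_sum[OF q(1) _ W b]) (use q(2) in \<open>simp add: less_imp_le\<close>)
  then have hq: "((\<lambda>a. q a * W a b) has_sum 0) A" using z by simp
  have hr: "((\<lambda>a. r a * W a b) has_sum chan_out r W A b) A"
    by (rule chan_slice_has_sum[OF r(1) r(2) W b])
  have "r a * W a b = 0" if a: "a \<in> A" for a
  proof -
    have "q a * W a b = 0"
      by (rule nonneg_has_sum_le_0D[OF hq order_refl _ a]) (use q(2) W(2) b in \<open>simp add: less_imp_le\<close>)
    then have "W a b = 0" using q(2)[OF a] by simp
    then show ?thesis by simp
  qed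
  then have "((\<lambda>a. r a * W a b) has_sum 0) A" using has_sum_0 by (metis (mono_tags, lifting))
  then show ?thesis using hr has_sum_unique by blast
qed

lemma core_common:
  fixes q r :: "'a \<Rightarrow> real" and W :: "'a \<Rightarrow> 'b \<Rightarrow> real"
  assumes q: "(q has_sum 1) A" "\<And>a. a \<in> A \<Longrightarrow> 0 < q a"
    and r: "(r has_sum 1) A" "\<And>a. a \<in> A \<Longrightarrow> 0 \<le> r a"
    and W: "\<And>a. a \<in> A \<Longrightarrow> (W a has_sum 1) B" "\<And>a b. a \<in> A \<Longrightarrow> b \<in> B \<Longrightarrow> 0 \<le> W a b"
  shows "((\<lambda>b. chan_out r W A b - chan_out q W A b) has_sum 0) B"
    and "((\<lambda>a. r a - q a) has_sum 0) A"
proof -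
  have "(chan_out q W A has_sum 1) B" by (rule chan_out_has_sum[OF q(1) _ W]) (use q(2) in \<open>simp add: less_imp_le\<close>)
  moreover have "(chan_out r W A has_sum 1) B" by (rule chan_out_has_sum[OF r W])
  ultimately show "((\<lambda>b. chan_out r W A b - chan_out q W A b) has_sum 0) B"
    using has_sum_diff' by fastforce
  show "((\<lambda>a. r a - q a) has_sum 0) A" using has_sum_diff'[OF r(1) q(1)] by simp
qed

lemma core_lower:
  fixes q r :: "'a \<Rightarrow> real" and W :: "'a \<Rightarrow> 'b \<Rightarrow> real" and f :: "real \<Rightarrow> real" and c :: real
  assumes q: "(q has_sum 1) A" "\<And>a. a \<in> A \<Longrightarrow> 0 < q a"
    and r: "(r has_sum 1) A"
    and W: "\<And>a. a \<in> A \<Longrightarrow> (W a has_sum 1) B" "\<And>a b. a \<in> A \<Longrightarrow> b \<in> B \<Longrightarrow> 0 \<le> W a b"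
    and I: "\<And>a. a \<in> A \<Longrightarrow> r a / q a \<in> Ival lo hi" and one: "1 \<in> Ival lo hi"
    and X: "((\<lambda>a. q a * (r a / q a - 1)^2) has_sum X) A"
    and Y: "((\<lambda>b. chan_out q W A b * (chan_out r W A b / chan_out q W A b - 1)^2) has_sum Y) B"
    and F: "(\<lambda>a. q a * f (r a / q a)) summable_on A"
    and f1: "f 1 = 0"
    and df: "\<And>t. 0 < t \<Longrightarrow> (f has_real_derivative deriv f t) (at t)"
    and d2f: "\<And>t. 0 < t \<Longrightarrow> (deriv f has_real_derivative deriv2 f t) (at t)"
    and c: "\<And>t. t \<in> Ival lo hi \<Longrightarrow> c \<le> deriv2 f t / 2"
  shows "c * (X - Y) \<le> (\<Sum>\<^sub>\<infinity>a\<in>A. q a * f (r a / q a))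
           - (\<Sum>\<^sub>\<infinity>b\<in>B. chan_out q W A b * f (chan_out r W A b / chan_out q W A b))"
proof -
  define d1 where "d1 = deriv f 1"
  define \<phi> where "\<phi> = (\<lambda>t. f t - d1 * (t - 1) - c * (t - 1)^2)"
  define d\<phi> where "d\<phi> = (\<lambda>t. deriv f t - d1 - c * (2 * (t - 1)))"
  define d2 where "d2 = (\<lambda>t. deriv2 f t - 2 * c)"
  define qy where "qy = chan_out q W A"
  define ry where "ry = chan_out r W A"
  define Fin where "Fin = (\<Sum>\<^sub>\<infinity>a\<in>A. q a * f (r a / q a))"
  have Ipos: "0 < t" if "t \<in> Ival lo hi" for t using that by (simp add: Ival_def)
  have rnn: "0 \<le> r a" if a: "a \<in> A" for a
  proof -
    have "0 < r a / q a" using Ipos[OF I[OF a]] .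
    then show ?thesis using q(2)[OF a] by (simp add: zero_less_divide_iff less_imp_le)
  qed
  have der1: "(\<phi> has_real_derivative d\<phi> t) (at t)" if "t \<in> Ival lo hi" for t
    unfolding \<phi>_def d\<phi>_def
    by (auto intro!: derivative_eq_intros df Ipos that)
  have der2: "(d\<phi> has_real_derivative d2 t) (at t)" if "t \<in> Ival lo hi" for t
    unfolding d2_def d\<phi>_def
    by (auto intro!: derivative_eq_intros d2f Ipos that)
  have d2nn: "0 \<le> d2 t" if "t \<in> Ival lo hi" for t using c[OF that] by (simp add: d2_def)
  have \<phi>1: "\<phi> 1 = 0" "d\<phi> 1 = 0" by (simp_all add: \<phi>_def d\<phi>_def d1_def f1)
  have nn: "0 \<le> \<phi> t" if "t \<in> Ival lo hi" for t
    by (rule nonneg_from_d2[OF der1 der2 d2nn one \<phi>1 that])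
  have tan: "\<phi> m + d\<phi> m * (t - m) \<le> \<phi> t" if "m \<in> Ival lo hi" "t \<in> Ival lo hi" for m t
    by (rule tangent_from_d2[OF der1 der2 d2nn that])
  note cc = core_common[OF q r(1) rnn W]
  have eqin: "q a * \<phi> (r a / q a) = q a * f (r a / q a) - d1 * (r a - q a) - c * (q a * (r a / q a - 1)^2)"
    if a: "a \<in> A" for a
    using q(2)[OF a] by (simp add: \<phi>_def field_simps)
  have hin: "((\<lambda>a. q a * \<phi> (r a / q a)) has_sum (Fin - d1 * 0 - c * X)) A"
  proof -
    have "((\<lambda>a. q a * f (r a / q a) - d1 * (r a - q a) - c * (q a * (r a / q a - 1)^2))
        has_sum (Fin - d1 * 0 - c * X)) A"
      unfolding Fin_def
      by (intro has_sum_diff' has_sum_cmult_right cc X has_sum_infsum F)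
    then show ?thesis using eqin by (metis (no_types, lifting) has_sum_cong)
  qed
  note DD = dpi[where W=W and B=B and A=A and q=q and r=r and lo=lo and hi=hi, OF has_sum_imp_summable[OF q(1)] q(2) has_sum_imp_summable[OF r] W I nn tan
          has_sum_imp_summable[OF hin]]
  have D: "(\<lambda>b. qy b * \<phi> (ry b / qy b)) summable_on B"
    "(\<Sum>\<^sub>\<infinity>b\<in>B. qy b * \<phi> (ry b / qy b)) \<le> (\<Sum>\<^sub>\<infinity>a\<in>A. q a * \<phi> (r a / q a))"
    unfolding qy_def ry_def using DD by auto
  define \<Phi> where "\<Phi> = (\<Sum>\<^sub>\<infinity>b\<in>B. qy b * \<phi> (ry b / qy b))"
  have eqout: "qy b * f (ry b / qy b) = qy b * \<phi> (ry b / qy b) + d1 * (ry b - qy b)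
      + c * (qy b * (ry b / qy b - 1)^2)" if b: "b \<in> B" for b
  proof (cases "qy b = 0")
    case True
    then have "ry b = 0" unfolding qy_def ry_def
      by (intro chan_zero[where W=W and B=B and A=A and q=q and r=r, OF has_sum_imp_summable[OF q(1)] q(2) has_sum_imp_summable[OF r] rnn W b])
    then show ?thesis using True by simp
  next
    case False
    then show ?thesis by (simp add: \<phi>_def field_simps)
  qed
  have hout: "((\<lambda>b. qy b * f (ry b / qy b)) has_sum (\<Phi> + d1 * 0 + c * Y)) B"
  proof -
    have "((\<lambda>b. qy b * \<phi> (ry b / qy b) + d1 * (ry b - qy b) + c * (qy b * (ry b / qy b - 1)^2))
        has_sum (\<Phi> + d1 * 0 + c * Y)) B"
      unfolding \<Phi>_def qy_def ry_def
      by (intro has_sum_add has_sum_cmult_right cc Y has_sum_infsum D(1)[unfolded qy_def ry_def])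
    then show ?thesis using eqout by (metis (no_types, lifting) has_sum_cong)
  qed
  have "(\<Sum>\<^sub>\<infinity>b\<in>B. qy b * f (ry b / qy b)) = \<Phi> + c * Y" using infsumI[OF hout] by simp
  moreover have "\<Phi> \<le> Fin - c * X" using D(2) infsumI[OF hin] by (simp add: \<Phi>_def)
  ultimately show ?thesis unfolding Fin_def[symmetric] qy_def[symmetric] ry_def[symmetric]
    by (simp add: algebra_simps)
qed


lemma core_upper:
  fixes q r :: "'a \<Rightarrow> real" and W :: "'a \<Rightarrow> 'b \<Rightarrow> real" and f :: "real \<Rightarrow> real" and e :: real
  assumes q: "(q has_sum 1) A" "\<And>a. a \<in> A \<Longrightarrow> 0 < q a"
    and r: "(r has_sum 1) A"
    and W: "\<And>a. a \<in> A \<Longrightarrow> (W a has_sum 1) B" "\<And>a b. a \<in> A \<Longrightarrow> b \<in> B \<Longrightarrow> 0 \<le> W a b"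
    and I: "\<And>a. a \<in> A \<Longrightarrow> r a / q a \<in> Ival lo hi" and one: "1 \<in> Ival lo hi"
    and X: "((\<lambda>a. q a * (r a / q a - 1)^2) has_sum X) A"
    and Y: "((\<lambda>b. chan_out q W A b * (chan_out r W A b / chan_out q W A b - 1)^2) has_sum Y) B"
    and F: "(\<lambda>a. q a * f (r a / q a)) summable_on A"
    and f1: "f 1 = 0"
    and df: "\<And>t. 0 < t \<Longrightarrow> (f has_real_derivative deriv f t) (at t)"
    and d2f: "\<And>t. 0 < t \<Longrightarrow> (deriv f has_real_derivative deriv2 f t) (at t)"
    and e: "\<And>t. t \<in> Ival lo hi \<Longrightarrow> deriv2 f t / 2 \<le> e"
  shows "(\<Sum>\<^sub>\<infinity>a\<in>A. q a * f (r a / q a))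
           - (\<Sum>\<^sub>\<infinity>b\<in>B. chan_out q W A b * f (chan_out r W A b / chan_out q W A b)) \<le> e * (X - Y)"
proof -
  define d1 where "d1 = deriv f 1"
  define \<phi> where "\<phi> = (\<lambda>t. e * (t - 1)^2 - (f t - d1 * (t - 1)))"
  define d\<phi> where "d\<phi> = (\<lambda>t. e * (2 * (t - 1)) - (deriv f t - d1))"
  define d2 where "d2 = (\<lambda>t. 2 * e - deriv2 f t)"
  define qy where "qy = chan_out q W A"
  define ry where "ry = chan_out r W A"
  define Fin where "Fin = (\<Sum>\<^sub>\<infinity>a\<in>A. q a * f (r a / q a))"
  have Ipos: "0 < t" if "t \<in> Ival lo hi" for t using that by (simp add: Ival_def)
  have rnn: "0 \<le> r a" if a: "a \<in> A" for a
  proof -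
    have "0 < r a / q a" using Ipos[OF I[OF a]] .
    then show ?thesis using q(2)[OF a] by (simp add: zero_less_divide_iff less_imp_le)
  qed
  have der1: "(\<phi> has_real_derivative d\<phi> t) (at t)" if "t \<in> Ival lo hi" for t
    unfolding \<phi>_def d\<phi>_def
    by (auto intro!: derivative_eq_intros df Ipos that)
  have der2: "(d\<phi> has_real_derivative d2 t) (at t)" if "t \<in> Ival lo hi" for t
    unfolding d2_def d\<phi>_def
    by (auto intro!: derivative_eq_intros d2f Ipos that)
  have d2nn: "0 \<le> d2 t" if "t \<in> Ival lo hi" for t using e[OF that] by (simp add: d2_def)
  have \<phi>1: "\<phi> 1 = 0" "d\<phi> 1 = 0" by (simp_all add: \<phi>_def d\<phi>_def d1_def f1)
  have nn: "0 \<le> \<phi> t" if "t \<in> Ival lo hi" for t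
    by (rule nonneg_from_d2[OF der1 der2 d2nn one \<phi>1 that])
  have tan: "\<phi> m + d\<phi> m * (t - m) \<le> \<phi> t" if "m \<in> Ival lo hi" "t \<in> Ival lo hi" for m t
    by (rule tangent_from_d2[OF der1 der2 d2nn that])
  note cc = core_common[OF q r(1) rnn W]
  have eqin: "q a * \<phi> (r a / q a) = e * (q a * (r a / q a - 1)^2) - q a * f (r a / q a) + d1 * (r a - q a)"
    if a: "a \<in> A" for a
    using q(2)[OF a] by (simp add: \<phi>_def field_simps)
  have hin: "((\<lambda>a. q a * \<phi> (r a / q a)) has_sum (e * X - Fin + d1 * 0)) A"
  proof -
    have "((\<lambda>a. e * (q a * (r a / q a - 1)^2) - q a * f (r a / q a) + d1 * (r a - q a))
        has_sum (e * X - Fin + d1 * 0)) A"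
      unfolding Fin_def
      by (intro has_sum_add has_sum_diff' has_sum_cmult_right cc X has_sum_infsum F)
    then show ?thesis using eqin by (metis (no_types, lifting) has_sum_cong)
  qed
  note DD = dpi[where W=W and B=B and A=A and q=q and r=r and lo=lo and hi=hi, OF has_sum_imp_summable[OF q(1)] q(2) has_sum_imp_summable[OF r] W I nn tan
          has_sum_imp_summable[OF hin]]
  have D: "(\<lambda>b. qy b * \<phi> (ry b / qy b)) summable_on B"
    "(\<Sum>\<^sub>\<infinity>b\<in>B. qy b * \<phi> (ry b / qy b)) \<le> (\<Sum>\<^sub>\<infinity>a\<in>A. q a * \<phi> (r a / q a))"
    unfolding qy_def ry_def using DD by auto
  define \<Phi> where "\<Phi> = (\<Sum>\<^sub>\<infinity>b\<in>B. qy b * \<phi> (ry b / qy b))"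
  have eqout: "qy b * f (ry b / qy b) = e * (qy b * (ry b / qy b - 1)^2) - qy b * \<phi> (ry b / qy b)
      + d1 * (ry b - qy b)" if b: "b \<in> B" for b
  proof (cases "qy b = 0")
    case True
    then have "ry b = 0" unfolding qy_def ry_def
      by (intro chan_zero[where W=W and B=B and A=A and q=q and r=r, OF has_sum_imp_summable[OF q(1)] q(2) has_sum_imp_summable[OF r] rnn W b])
    then show ?thesis using True by simp
  next
    case False
    then show ?thesis by (simp add: \<phi>_def field_simps)
  qed
  have hout: "((\<lambda>b. qy b * f (ry b / qy b)) has_sum (e * Y - \<Phi> + d1 * 0)) B"
  proof -
    have "((\<lambda>b. e * (qy b * (ry b / qy b - 1)^2) - qy b * \<phi> (ry b / qy b) + d1 * (ry b - qy b))
        has_sum (e * Y - \<Phi> + d1 * 0)) B"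
      unfolding \<Phi>_def qy_def ry_def
      by (intro has_sum_add has_sum_diff' has_sum_cmult_right cc Y has_sum_infsum D(1)[unfolded qy_def ry_def])
    then show ?thesis using eqout by (metis (no_types, lifting) has_sum_cong)
  qed
  have "(\<Sum>\<^sub>\<infinity>b\<in>B. qy b * f (ry b / qy b)) = e * Y - \<Phi>" using infsumI[OF hout] by simp
  moreover have "\<Phi> \<le> e * X - Fin" using D(2) infsumI[OF hin] by (simp add: \<Phi>_def)
  ultimately show ?thesis unfolding Fin_def[symmetric] qy_def[symmetric] ry_def[symmetric]
    by (simp add: algebra_simps)
qed

lemma sq_id: "(x::real) * (a / x - 1)^2 = (a - x)^2 / x"
  by (cases "x = 0") (simp_all add: field_simps power2_eq_square)

lemma pmf_has_sum: "is_pmf p \<Longrightarrow> (p has_sum 1) UNIV"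
  by (simp add: is_pmf_def)

lemma chi_phi:
  shows "\<And>t. t \<in> Ival lo hi \<Longrightarrow> ((\<lambda>t. (t - 1)^2) has_real_derivative 2 * (t - 1)) (at t)"
    and "\<And>t. t \<in> Ival lo hi \<Longrightarrow> ((\<lambda>t. 2 * (t - 1)) has_real_derivative 2) (at t)"
  by (auto intro!: derivative_eq_intros)

lemma chi_tan: "m \<in> Ival lo hi \<Longrightarrow> t \<in> Ival lo hi \<Longrightarrow> (m - 1)^2 + 2 * (m - 1) * (t - m) \<le> (t - 1)^2"
  by (rule tangent_from_d2[where ?d2.0="\<lambda>_. 2", OF chi_phi]) auto

lemma letter_facts:
  fixes p q :: "'x \<Rightarrow> real" and w :: "'x \<Rightarrow> 'y \<Rightarrow> real" and l :: real
  assumes p: "is_pmf p" "\<And>x. 0 < p x" and q: "is_pmf q" "\<And>x. 0 < q x"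
    and w: "\<And>x. is_pmf (w x)"
    and S: "(\<lambda>x. (p x - q x)^2 / q x) summable_on UNIV"
  shows "(\<lambda>y. (chan_out p w UNIV y - chan_out q w UNIV y)^2 / chan_out q w UNIV y) summable_on UNIV"
    and "chi2 (chan_out p w UNIV) (chan_out q w UNIV) UNIV \<le> chi2 p q UNIV"
    and "0 \<le> chi2 (chan_out p w UNIV) (chan_out q w UNIV) UNIV"
    and "((\<lambda>x. (l * p x + (1 - l) * q x)^2 / q x) has_sum (1 + l^2 * chi2 p q UNIV)) UNIV"
    and "((\<lambda>y. (chan_out (\<lambda>x. l * p x + (1 - l) * q x) w UNIV y)^2 / chan_out q w UNIV y)
          has_sum (1 + l^2 * chi2 (chan_out p w UNIV) (chan_out q w UNIV) UNIV)) UNIV"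
proof -
  define py where "py = chan_out p w UNIV"
  define qy where "qy = chan_out q w UNIV"
  have hp: "(p has_sum 1) UNIV" using p(1) by (rule pmf_has_sum)
  have hq: "(q has_sum 1) UNIV" using q(1) by (rule pmf_has_sum)
  have hw: "(w x has_sum 1) UNIV" for x using w by (rule pmf_has_sum)
  have wnn: "0 \<le> w x y" for x y using w[of x] by (simp add: is_pmf_def)
  have I: "p x / q x \<in> Ival (-\<infinity>) \<infinity>" for x using p(2)[of x] q(2)[of x] by (simp add: Ival_def)
  have S': "(\<lambda>x. q x * (\<phi> (p x / q x))) summable_on UNIV" if "\<phi> = (\<lambda>t. (t - 1)^2)" for \<phi>
    using S by (simp add: that sq_id)
  note DD = dpi[where W=w and B=UNIV and A=UNIV and q=q and r=p and lo="-\<infinity>" and hi=\<infinity>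
      and \<phi>="\<lambda>t. (t - 1)^2" and d\<phi>="\<lambda>t. 2 * (t - 1)",
      OF has_sum_imp_summable[OF hq] q(2) has_sum_imp_summable[OF hp] hw wnn I _ chi_tan S'[OF refl]]
  have Dy: "(\<lambda>y. (py y - qy y)^2 / qy y) summable_on UNIV"
    using DD(1) by (simp add: sq_id py_def qy_def)
  then show "(\<lambda>y. (chan_out p w UNIV y - chan_out q w UNIV y)^2 / chan_out q w UNIV y) summable_on UNIV"
    by (simp add: py_def qy_def)
  show "chi2 (chan_out p w UNIV) (chan_out q w UNIV) UNIV \<le> chi2 p q UNIV"
    using DD(2) by (simp add: sq_id chi2_def)
  have qynn: "0 \<le> qy y" for y unfolding qy_def chan_out_def
    by (rule infsum_nonneg) (use q(2) wnn in \<open>simp add: less_imp_le\<close>)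
  show "0 \<le> chi2 (chan_out p w UNIV) (chan_out q w UNIV) UNIV"
    unfolding chi2_def py_def[symmetric] qy_def[symmetric]
    by (rule infsum_nonneg) (use qynn in simp)
  have hpq0: "((\<lambda>x. p x - q x) has_sum 0) UNIV" using has_sum_diff'[OF hp hq] by simp
  have "((\<lambda>x. q x + 2 * l * (p x - q x) + l^2 * ((p x - q x)^2 / q x))
      has_sum (1 + 2 * l * 0 + l^2 * chi2 p q UNIV)) UNIV"
    unfolding chi2_def by (intro has_sum_add has_sum_cmult_right hq hpq0 has_sum_infsum S)
  moreover have "q x + 2 * l * (p x - q x) + l^2 * ((p x - q x)^2 / q x) = (l * p x + (1 - l) * q x)^2 / q x" for x
    using q(2)[of x] by (simp add: field_simps power2_eq_square)
  ultimately show "((\<lambda>x. (l * p x + (1 - l) * q x)^2 / q x) has_sum (1 + l^2 * chi2 p q UNIV)) UNIV"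
    by simp
  define rl where "rl = (\<lambda>x. l * p x + (1 - l) * q x)"
  define ry where "ry = chan_out rl w UNIV"
  have hpy: "(py has_sum 1) UNIV" unfolding py_def
    by (rule chan_out_has_sum[OF hp _ hw wnn]) (use p(2) in \<open>simp add: less_imp_le\<close>)
  have hqy: "(qy has_sum 1) UNIV" unfolding qy_def
    by (rule chan_out_has_sum[OF hq _ hw wnn]) (use q(2) in \<open>simp add: less_imp_le\<close>)
  have sp: "((\<lambda>x. p x * w x y) has_sum py y) UNIV" for y unfolding py_def
    by (rule chan_slice_has_sum[OF has_sum_imp_summable[OF hp] _ hw wnn]) (use p(2) in \<open>simp_all add: less_imp_le\<close>)
  have sq: "((\<lambda>x. q x * w x y) has_sum qy y) UNIV" for y unfolding qy_def
    by (rule chan_slice_has_sum[OF has_sum_imp_summable[OF hq] _ hw wnn]) (use q(2) in \<open>simp_all add: less_imp_le\<close>)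
  have ryeq: "ry y = l * py y + (1 - l) * qy y" for y
  proof -
    have "((\<lambda>x. l * (p x * w x y) + (1 - l) * (q x * w x y)) has_sum (l * py y + (1 - l) * qy y)) UNIV"
      by (intro has_sum_add has_sum_cmult_right sp sq)
    then have "((\<lambda>x. rl x * w x y) has_sum (l * py y + (1 - l) * qy y)) UNIV"
      by (simp add: rl_def algebra_simps)
    then show ?thesis unfolding ry_def chan_out_def by (simp add: infsumI)
  qed
  have py0: "py y = 0" if "qy y = 0" for y unfolding py_def
    by (rule chan_zero[where W=w and B=UNIV and A=UNIV and q=q and r=p, OF has_sum_imp_summable[OF hq] q(2)
          has_sum_imp_summable[OF hp] _ hw wnn]) (use p(2) that in \<open>simp_all add: less_imp_le qy_def\<close>)
  have hpqy0: "((\<lambda>y. py y - qy y) has_sum 0) UNIV" using has_sum_diff'[OF hpy hqy] by simp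
  have "((\<lambda>y. qy y + 2 * l * (py y - qy y) + l^2 * ((py y - qy y)^2 / qy y))
      has_sum (1 + 2 * l * 0 + l^2 * chi2 py qy UNIV)) UNIV"
    unfolding chi2_def by (intro has_sum_add has_sum_cmult_right hqy hpqy0 has_sum_infsum Dy)
  moreover have "qy y + 2 * l * (py y - qy y) + l^2 * ((py y - qy y)^2 / qy y) = (ry y)^2 / qy y" for y
  proof (cases "qy y = 0")
    case True then show ?thesis using py0[OF True] by (simp add: ryeq)
  next
    case False then show ?thesis by (simp add: ryeq field_simps power2_eq_square)
  qed
  ultimately show "((\<lambda>y. (chan_out (\<lambda>x. l * p x + (1 - l) * q x) w UNIV y)^2 / chan_out q w UNIV y)
          has_sum (1 + l^2 * chi2 (chan_out p w UNIV) (chan_out q w UNIV) UNIV)) UNIV"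
    by (simp add: ry_def rl_def py_def qy_def)
qed

lemma ereal_prod_mono:
  fixes f g :: "'i \<Rightarrow> ereal"
  assumes "\<And>i. i \<in> A \<Longrightarrow> 0 \<le> f i \<and> f i \<le> g i"
  shows "prod f A \<le> prod g A"
  using assms
proof (induction A rule: infinite_finite_induct)
  case (insert i A)
  have f0: "0 \<le> f i" "f i \<le> g i" using insert.prems by auto
  have p0: "0 \<le> prod f A" by (rule prod_ereal_pos) (use insert.prems in auto)
  have "prod f A \<le> prod g A" by (rule insert.IH) (use insert.prems in auto)
  then have "f i * prod f A \<le> g i * prod g A" by (rule ereal_mult_mono'[OF f0(1) p0 f0(2)])
  then show ?case using insert by simp
qed auto

lemma exists_le_ratio:
  fixes p q :: "'x \<Rightarrow> real"
  assumes "is_pmf p" "is_pmf q" "\<And>x. 0 < q x"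
  shows "\<exists>x. p x / q x \<le> 1" and "\<exists>x. 1 \<le> p x / q x"
proof -
  have hp: "(p has_sum 1) UNIV" "(q has_sum 1) UNIV" using assms by (simp_all add: is_pmf_def)
  show "\<exists>x. p x / q x \<le> 1"
  proof (rule ccontr)
    assume "\<not> ?thesis"
    then have "1 < p x / q x" for x by (simp add: not_le)
    then have "q x < p x" for x using less_divide_eq_1_pos[OF assms(3)[of x]] by blast
    then have "(1::real) < 1" using has_sum_strict_mono[OF hp(2) hp(1), of undefined] by (simp add: less_imp_le)
    then show False by simp
  qed
  show "\<exists>x. 1 \<le> p x / q x"
  proof (rule ccontr)
    assume "\<not> ?thesis"
    then have "p x / q x < 1" for x by (simp add: not_le)
    then have "p x < q x" for x using divide_less_eq_1_pos[OF assms(3)[of x]] by blast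
    then have "(1::real) < 1" using has_sum_strict_mono[OF hp(1) hp(2), of undefined] by (simp add: less_imp_le)
    then show False by simp
  qed
qed

locale setting =
  fixes P Q :: "nat \<Rightarrow> 'x::countable \<Rightarrow> real" and W :: "nat \<Rightarrow> 'x \<Rightarrow> 'y::countable \<Rightarrow> real"
    and n :: nat
  assumes pmfP: "\<forall>i<n. is_pmf (P i) \<and> (\<forall>x. 0 < P i x)"
    and pmfQ: "\<forall>i<n. is_pmf (Q i) \<and> (\<forall>x. 0 < Q i x)"
    and chan: "\<forall>i<n. \<forall>x. is_pmf (W i x)"
begin

lemma P_pos: "i < n \<Longrightarrow> 0 < P i x" and Q_pos: "i < n \<Longrightarrow> 0 < Q i x"
  and P_pmf: "i < n \<Longrightarrow> is_pmf (P i)" and Q_pmf: "i < n \<Longrightarrow> is_pmf (Q i)"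
  and W_pmf: "i < n \<Longrightarrow> is_pmf (W i x)"
  using pmfP pmfQ chan by auto

lemma W_nn: "i < n \<Longrightarrow> 0 \<le> W i x y" using W_pmf[of i x] by (simp add: is_pmf_def)

lemma nth_seqs: "xs \<in> seqs n \<Longrightarrow> i < n \<Longrightarrow> i < length xs" by (simp add: seqs_def)

lemma q_pos: "0 < prodX n Q xs"
  unfolding prodX_def by (rule prod_pos) (use Q_pos in auto)

lemma q_sum: "(prodX n Q has_sum 1) (seqs n)"
  unfolding prodX_def using prod_has_sum[of n Q "\<lambda>_. 1"] Q_pmf Q_pos
  by (simp add: is_pmf_def less_imp_le)

lemma R_pos: "0 \<le> l \<Longrightarrow> l \<le> 1 \<Longrightarrow> i < n \<Longrightarrow> 0 < l * P i x + (1 - l) * Q i x"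
proof -
  assume l: "0 \<le> l" "l \<le> 1" and i: "i < n"
  have "0 \<le> l * P i x" using l P_pos[OF i, of x] by simp
  moreover have "0 \<le> (1 - l) * Q i x" using l Q_pos[OF i, of x] by simp
  moreover have "0 < l * P i x \<or> 0 < (1 - l) * Q i x"
    using l P_pos[OF i, of x] Q_pos[OF i, of x] by (cases "l = 0") auto
  ultimately show ?thesis by linarith
qed

lemma R_has_sum: "i < n \<Longrightarrow> ((\<lambda>x. l * P i x + (1 - l) * Q i x) has_sum 1) UNIV"
proof -
  assume i: "i < n"
  have "((\<lambda>x. l * P i x + (1 - l) * Q i x) has_sum (l * 1 + (1 - l) * 1)) UNIV"
    by (intro has_sum_add has_sum_cmult_right pmf_has_sum P_pmf Q_pmf i)
  then show ?thesis by simp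
qed

lemma r_sum: "0 \<le> l \<Longrightarrow> l \<le> 1 \<Longrightarrow> (Rlam n l P Q has_sum 1) (seqs n)"
  unfolding Rlam_def using prod_has_sum[of n "\<lambda>i x. l * P i x + (1 - l) * Q i x" "\<lambda>_. 1"]
    R_has_sum R_pos by (simp add: less_imp_le)

lemma W_sum: "(chanN n W xs has_sum 1) (seqs n)"
  unfolding chanN_def using prod_has_sum[of n "\<lambda>i y. W i (xs ! i) y" "\<lambda>_. 1"] W_pmf W_nn
  by (simp add: is_pmf_def)

lemma W_nnN: "0 \<le> chanN n W xs ys"
  unfolding chanN_def by (rule prod_nonneg) (use W_nn in auto)

lemma R_ratio: "i < n \<Longrightarrow> (l * P i x + (1 - l) * Q i x) / Q i x = 1 - l + l * (P i x / Q i x)"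
proof -
  assume i: "i < n"
  have "Q i x \<noteq> 0" using Q_pos[OF i, of x] by simp
  then show ?thesis by (simp add: field_simps)
qed

lemma ratio_eq: "Rlam n l P Q xs / prodX n Q xs = (\<Prod>i<n. 1 - l + l * (P i (xs ! i) / Q i (xs ! i)))"
  unfolding Rlam_def prodX_def prod_dividef[symmetric]
  by (rule prod.cong) (simp_all add: R_ratio)

lemma INF_ratio: "i < n \<Longrightarrow> 0 \<le> (INF x. P i x / Q i x) \<and> (INF x. P i x / Q i x) \<le> P i x / Q i x"
proof -
  assume i: "i < n"
  have nn: "0 \<le> P i x / Q i x" for x using P_pos[OF i] Q_pos[OF i] by (simp add: less_imp_le)
  have "bdd_below (range (\<lambda>x. P i x / Q i x))" using nn by (intro bdd_belowI) auto
  then show ?thesis using nn by (auto intro: cINF_lower cINF_greatest)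
qed

lemma ratio_I:
  assumes l: "0 \<le> l" "l \<le> 1"
  shows "Rlam n l P Q xs / prodX n Q xs \<in> Ival (xi1 n l P Q) (xi2 n l P Q)"
proof -
  have pos: "0 < 1 - l + l * (P i (xs ! i) / Q i (xs ! i))" if i: "i < n" for i
  proof -
    have "0 < l * P i (xs ! i) + (1 - l) * Q i (xs ! i)" by (rule R_pos[OF l i])
    then have "0 < (l * P i (xs ! i) + (1 - l) * Q i (xs ! i)) / Q i (xs ! i)" using Q_pos[OF i] by simp
    then show ?thesis using R_ratio[OF i] by simp
  qed
  have "0 < Rlam n l P Q xs / prodX n Q xs" unfolding ratio_eq by (rule prod_pos) (use pos in auto)
  moreover have "xi1 n l P Q \<le> ereal (Rlam n l P Q xs / prodX n Q xs)"
    unfolding xi1_def ratio_eq ereal_less_eq(3)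
  proof (rule prod_mono, rule conjI)
    fix i assume "i \<in> {..<n}"
    then have i: "i < n" by simp
    note INF_ratio[OF i, of "xs ! i"]
    then show "0 \<le> 1 - l + l * (INF x. P i x / Q i x)" using l by simp
    show "1 - l + l * (INF x. P i x / Q i x) \<le> 1 - l + l * (P i (xs ! i) / Q i (xs ! i))"
      using mult_left_mono[OF conjunct2[OF INF_ratio[OF i, of "xs ! i"]] l(1)] by simp
  qed
  moreover have "ereal (Rlam n l P Q xs / prodX n Q xs) \<le> xi2 n l P Q"
    unfolding xi2_def ratio_eq prod_ereal[symmetric]
  proof (rule ereal_prod_mono, rule conjI)
    fix i assume "i \<in> {..<n}"
    then have i: "i < n" by simp
    show "0 \<le> ereal (1 - l + l * (P i (xs ! i) / Q i (xs ! i)))" using pos[OF i] by simp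
    have "ereal (P i (xs ! i) / Q i (xs ! i)) \<le> (SUP x. ereal (P i x / Q i x))" by (rule SUP_upper) simp
    then have "ereal l * ereal (P i (xs ! i) / Q i (xs ! i)) \<le> ereal l * (SUP x. ereal (P i x / Q i x))"
      using l by (intro ereal_mult_left_mono) auto
    then show "ereal (1 - l + l * (P i (xs ! i) / Q i (xs ! i)))
        \<le> ereal (1 - l) + ereal l * (SUP x. ereal (P i x / Q i x))"
      by (metis add_left_mono plus_ereal.simps(1) times_ereal.simps(1))
  qed
  ultimately show ?thesis by (simp add: Ival_def)
qed

lemma one_I:
  assumes l: "0 \<le> l" "l \<le> 1"
  shows "1 \<in> Ival (xi1 n l P Q) (xi2 n l P Q)"
proof -
  have "xi1 n l P Q \<le> ereal 1"
    unfolding xi1_def ereal_less_eq(3)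
  proof -
    have "(\<Prod>i<n. 1 - l + l * (INF x. P i x / Q i x)) \<le> (\<Prod>i<n. 1)"
    proof (rule prod_mono, rule conjI)
      fix i assume "i \<in> {..<n}"
      then have i: "i < n" by simp
      obtain x where x: "P i x / Q i x \<le> 1"
        using exists_le_ratio(1)[OF P_pmf[OF i] Q_pmf[OF i] Q_pos[OF i]] by blast
      have "(INF x. P i x / Q i x) \<le> 1" using INF_ratio[OF i, of x] x by simp
      then show "1 - l + l * (INF x. P i x / Q i x) \<le> 1" using l by (simp add: mult_left_le)
      show "0 \<le> 1 - l + l * (INF x. P i x / Q i x)" using INF_ratio[OF i, of x] l by simp
    qed
    then show "(\<Prod>i<n. 1 - l + l * (INF x. P i x / Q i x)) \<le> 1" by simp
  qed
  moreover have "ereal 1 \<le> xi2 n l P Q"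
  proof -
    have "(\<Prod>i<n. (1::ereal)) \<le> xi2 n l P Q" unfolding xi2_def
    proof (rule ereal_prod_mono, rule conjI)
      fix i assume "i \<in> {..<n}"
      then have i: "i < n" by simp
      obtain x where x: "1 \<le> P i x / Q i x"
        using exists_le_ratio(2)[OF P_pmf[OF i] Q_pmf[OF i] Q_pos[OF i]] by blast
      have "ereal 1 \<le> (SUP x. ereal (P i x / Q i x))"
        by (rule order_trans[OF _ SUP_upper[of x]]) (use x in simp_all)
      then have "ereal l * ereal 1 \<le> ereal l * (SUP x. ereal (P i x / Q i x))"
        using l by (intro ereal_mult_left_mono) auto
      then have "ereal (1 - l) + ereal l * ereal 1 \<le> ereal (1 - l) + ereal l * (SUP x. ereal (P i x / Q i x))"
        by (rule add_left_mono)
      moreover have "ereal (1 - l) + ereal l * ereal 1 = 1" by (simp add: one_ereal_def)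
      ultimately have "ereal 1 \<le> ereal (1 - l) + ereal l * (SUP x. ereal (P i x / Q i x))" by simp
      then show "1 \<le> ereal (1 - l) + ereal l * (SUP x. ereal (P i x / Q i x))" unfolding one_ereal_def .
    qed simp
    then show ?thesis by (simp add: one_ereal_def)
  qed
  ultimately show ?thesis by (simp add: Ival_def one_ereal_def)
qed

end

context setting
begin

lemma r_nn: "0 \<le> l \<Longrightarrow> l \<le> 1 \<Longrightarrow> 0 \<le> Rlam n l P Q xs"
  unfolding Rlam_def by (rule prod_nonneg) (use R_pos in \<open>auto intro: less_imp_le\<close>)

lemma chan_out_prod:
  fixes p :: "nat \<Rightarrow> 'x \<Rightarrow> real"
  assumes p: "\<And>i. i < n \<Longrightarrow> p i summable_on UNIV" "\<And>i x. i < n \<Longrightarrow> 0 \<le> p i x"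
  shows "chan_out (\<lambda>xs. \<Prod>i<n. p i (xs ! i)) (chanN n W) (seqs n) ys
       = (\<Prod>i<n. chan_out (p i) (W i) UNIV (ys ! i))"
proof -
  have hs: "((\<lambda>x. p i x * W i x (ys ! i)) has_sum chan_out (p i) (W i) UNIV (ys ! i)) UNIV" if i: "i < n" for i
    by (rule chan_slice_has_sum[where W="W i" and B=UNIV, OF p(1)[OF i] p(2)[OF i] pmf_has_sum[OF W_pmf[OF i]] W_nn[OF i]]) simp
  have "((\<lambda>xs. \<Prod>i<n. p i (xs ! i) * W i (xs ! i) (ys ! i)) has_sum (\<Prod>i<n. chan_out (p i) (W i) UNIV (ys ! i))) (seqs n)"
    by (rule prod_has_sum) (use hs p(2) W_nn in auto)
  then show ?thesis unfolding chan_out_def chanN_def by (simp add: prod.distrib infsumI)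
qed

lemma X_sum:
  assumes l: "0 \<le> l" "l \<le> 1"
    and S: "\<forall>i<n. (\<lambda>x. (P i x - Q i x)^2 / Q i x) summable_on UNIV"
  shows "((\<lambda>xs. prodX n Q xs * (Rlam n l P Q xs / prodX n Q xs - 1)^2)
      has_sum ((\<Prod>i<n. 1 + l^2 * chi2 (P i) (Q i) UNIV) - 1)) (seqs n)"
proof -
  have h: "((\<lambda>x. (l * P i x + (1 - l) * Q i x)^2 / Q i x) has_sum (1 + l^2 * chi2 (P i) (Q i) UNIV)) UNIV"
    if i: "i < n" for i
    by (rule letter_facts(4)[where w="W i", OF P_pmf[OF i] P_pos[OF i] Q_pmf[OF i] Q_pos[OF i] W_pmf[OF i]])
       (use S i in simp)
  have "((\<lambda>xs. \<Prod>i<n. (l * P i (xs ! i) + (1 - l) * Q i (xs ! i))^2 / Q i (xs ! i))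
      has_sum (\<Prod>i<n. 1 + l^2 * chi2 (P i) (Q i) UNIV)) (seqs n)"
    by (rule prod_has_sum) (use h Q_pos in \<open>auto intro!: divide_nonneg_pos\<close>)
  then have hR2: "((\<lambda>xs. (Rlam n l P Q xs)^2 / prodX n Q xs)
      has_sum (\<Prod>i<n. 1 + l^2 * chi2 (P i) (Q i) UNIV)) (seqs n)"
    by (simp add: Rlam_def prodX_def prod_power_distrib prod_dividef)
  have "((\<lambda>xs. (Rlam n l P Q xs)^2 / prodX n Q xs - 2 * Rlam n l P Q xs + prodX n Q xs)
      has_sum ((\<Prod>i<n. 1 + l^2 * chi2 (P i) (Q i) UNIV) - 2 * 1 + 1)) (seqs n)"
    by (intro has_sum_add has_sum_diff' has_sum_cmult_right hR2 r_sum[OF l] q_sum)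
  moreover have "(Rlam n l P Q xs)^2 / prodX n Q xs - 2 * Rlam n l P Q xs + prodX n Q xs
      = prodX n Q xs * (Rlam n l P Q xs / prodX n Q xs - 1)^2" for xs
    using q_pos[of xs] by (simp add: field_simps power2_eq_square)
  ultimately show ?thesis by simp
qed

lemma Y_sum:
  assumes l: "0 \<le> l" "l \<le> 1"
    and S: "\<forall>i<n. (\<lambda>x. (P i x - Q i x)^2 / Q i x) summable_on UNIV"
  shows "((\<lambda>ys. chan_out (prodX n Q) (chanN n W) (seqs n) ys
        * (chan_out (Rlam n l P Q) (chanN n W) (seqs n) ys / chan_out (prodX n Q) (chanN n W) (seqs n) ys - 1)^2)
      has_sum ((\<Prod>i<n. 1 + l^2 * chi2 (chan_out (P i) (W i) UNIV) (chan_out (Q i) (W i) UNIV) UNIV) - 1)) (seqs n)"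
proof -
  define qy where "qy = chan_out (prodX n Q) (chanN n W) (seqs n)"
  define ry where "ry = chan_out (Rlam n l P Q) (chanN n W) (seqs n)"
  define Ri where "Ri = (\<lambda>i x. l * P i x + (1 - l) * Q i x)"
  define QY where "QY = (\<lambda>i. chan_out (Q i) (W i) UNIV)"
  define RY where "RY = (\<lambda>i. chan_out (Ri i) (W i) UNIV)"
  have qy_eq: "qy ys = (\<Prod>i<n. QY i (ys ! i))" for ys
    unfolding qy_def QY_def prodX_def
    by (rule chan_out_prod) (use Q_pmf Q_pos in \<open>auto simp: is_pmf_def intro: has_sum_imp_summable less_imp_le\<close>)
  have ry_eq: "ry ys = (\<Prod>i<n. RY i (ys ! i))" for ys
    unfolding ry_def RY_def Rlam_def Ri_def
    by (rule chan_out_prod) (use R_has_sum R_pos[OF l] in \<open>auto intro: has_sum_imp_summable less_imp_le\<close>)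
  have QYnn: "0 \<le> QY i y" if "i < n" for i y unfolding QY_def chan_out_def
    by (rule infsum_nonneg) (use Q_pos W_nn that in \<open>simp add: less_imp_le\<close>)
  have h: "((\<lambda>y. (RY i y)^2 / QY i y) has_sum (1 + l^2 * chi2 (chan_out (P i) (W i) UNIV) (chan_out (Q i) (W i) UNIV) UNIV)) UNIV"
    if i: "i < n" for i
    unfolding RY_def QY_def Ri_def
    by (rule letter_facts(5)[where w="W i", OF P_pmf[OF i] P_pos[OF i] Q_pmf[OF i] Q_pos[OF i] W_pmf[OF i]])
       (use S i in simp)
  have "((\<lambda>ys. \<Prod>i<n. (RY i (ys ! i))^2 / QY i (ys ! i))
      has_sum (\<Prod>i<n. 1 + l^2 * chi2 (chan_out (P i) (W i) UNIV) (chan_out (Q i) (W i) UNIV) UNIV)) (seqs n)"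
    by (rule prod_has_sum) (use h QYnn in auto)
  then have hR2: "((\<lambda>ys. (ry ys)^2 / qy ys)
      has_sum (\<Prod>i<n. 1 + l^2 * chi2 (chan_out (P i) (W i) UNIV) (chan_out (Q i) (W i) UNIV) UNIV)) (seqs n)"
    by (simp add: ry_eq qy_eq prod_power_distrib prod_dividef)
  have hqy: "(qy has_sum 1) (seqs n)" unfolding qy_def
    by (rule chan_out_has_sum[OF q_sum _ W_sum W_nnN]) (use q_pos in \<open>simp add: less_imp_le\<close>)
  have hry: "(ry has_sum 1) (seqs n)" unfolding ry_def
    by (rule chan_out_has_sum[OF r_sum[OF l] _ W_sum W_nnN]) (rule r_nn[OF l])
  have z: "ry ys = 0" if "ys \<in> seqs n" "qy ys = 0" for ys
    unfolding ry_def
    by (rule chan_zero[where W="chanN n W" and B="seqs n" and A="seqs n" and q="prodX n Q",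
          OF has_sum_imp_summable[OF q_sum] q_pos has_sum_imp_summable[OF r_sum[OF l]] _ W_sum W_nnN that(1)])
       (use that(2) r_nn[OF l] in \<open>simp_all add: qy_def\<close>)
  have "((\<lambda>ys. (ry ys)^2 / qy ys - 2 * ry ys + qy ys)
      has_sum ((\<Prod>i<n. 1 + l^2 * chi2 (chan_out (P i) (W i) UNIV) (chan_out (Q i) (W i) UNIV) UNIV) - 2 * 1 + 1)) (seqs n)"
    by (intro has_sum_add has_sum_diff' has_sum_cmult_right hR2 hry hqy)
  moreover have "(ry ys)^2 / qy ys - 2 * ry ys + qy ys = qy ys * (ry ys / qy ys - 1)^2" if "ys \<in> seqs n" for ys
  proof (cases "qy ys = 0")
    case True then show ?thesis using z[OF that True] by simp
  next
    case False then show ?thesis by (simp add: field_simps power2_eq_square)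
  qed
  ultimately have "((\<lambda>ys. qy ys * (ry ys / qy ys - 1)^2)
      has_sum ((\<Prod>i<n. 1 + l^2 * chi2 (chan_out (P i) (W i) UNIV) (chan_out (Q i) (W i) UNIV) UNIV) - 1)) (seqs n)"
    using has_sum_cong[of "seqs n" "\<lambda>ys. (ry ys)^2 / qy ys - 2 * ry ys + qy ys" "\<lambda>ys. qy ys * (ry ys / qy ys - 1)^2"]
    by simp
  then show ?thesis by (simp add: qy_def ry_def)
qed

end

lemma prod_diff_ge:
  fixes a b :: "nat \<Rightarrow> real"
  assumes "\<And>i. i < n \<Longrightarrow> 0 \<le> b i \<and> b i \<le> a i"
  shows "(\<Sum>i<n. a i - b i) \<le> (\<Prod>i<n. 1 + a i) - (\<Prod>i<n. 1 + b i)"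
  using assms
proof (induction n)
  case 0 then show ?case by simp
next
  case (Suc n)
  define A where "A = (\<Prod>i<n. 1 + a i)"
  define B where "B = (\<Prod>i<n. 1 + b i)"
  have IH: "(\<Sum>i<n. a i - b i) \<le> A - B" unfolding A_def B_def by (rule Suc.IH) (use Suc.prems in auto)
  have B1: "1 \<le> B" unfolding B_def
    using prod_mono[of "{..<n}" "\<lambda>_. 1::real" "\<lambda>i. 1 + b i"] Suc.prems by auto
  have AB: "B \<le> A" unfolding A_def B_def by (rule prod_mono) (use Suc.prems in force)
  have ab: "0 \<le> b n" "b n \<le> a n" using Suc.prems[of n] by auto
  have "b n * (A - 1) - b n * (B - 1) \<le> a n * (A - 1) - b n * (B - 1)"
    using mult_right_mono[OF ab(2), of "A - 1"] AB B1 by simp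
  moreover have "0 \<le> b n * (A - B)" using ab AB by simp
  ultimately have "a n - b n \<le> A * (1 + a n) - B * (1 + b n) - (A - B)"
    by (simp add: algebra_simps)
  with IH show ?case by (simp add: A_def[symmetric] B_def[symmetric] algebra_simps)
qed

lemma deriv_facts:
  fixes f :: "real \<Rightarrow> real"
  assumes cvx: "convex_on {0<..} f"
    and diff: "\<forall>t>0. f differentiable (at t) \<and> deriv f differentiable (at t)"
  shows "\<And>t. 0 < t \<Longrightarrow> (f has_real_derivative deriv f t) (at t)"
    and "\<And>t. 0 < t \<Longrightarrow> (deriv f has_real_derivative deriv2 f t) (at t)"
    and "\<And>t. 0 < t \<Longrightarrow> 0 \<le> deriv2 f t"
proof -
  show df: "(f has_real_derivative deriv f t) (at t)" if "0 < t" for t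
    using diff that DERIV_deriv_iff_real_differentiable by blast
  show d2: "(deriv f has_real_derivative deriv2 f t) (at t)" if "0 < t" for t
    using diff that DERIV_deriv_iff_real_differentiable unfolding deriv2_def by blast
  have tan: "f y - f x \<ge> deriv f x * (y - x)" if "0 < x" "0 < y" for x y
    by (rule convex_on_imp_above_tangent[OF cvx]) (use that df[OF that(1)] in \<open>auto intro: has_field_derivative_at_within simp: interior_open\<close>)
  have mono: "mono_on {0<..} (deriv f)"
  proof (rule mono_onI)
    fix x y :: real assume xy: "x \<in> {0<..}" "y \<in> {0<..}" "x \<le> y"
    show "deriv f x \<le> deriv f y"
    proof (cases "x = y")
      case False
      then have "x < y" using xy by simp
      have "deriv f x * (y - x) \<le> f y - f x" using tan xy by simp
      moreover have "deriv f y * (x - y) \<le> f x - f y" using tan xy by simp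
      ultimately have "deriv f x * (y - x) \<le> deriv f y * (y - x)" by (simp add: algebra_simps)
      then show ?thesis using \<open>x < y\<close> by simp
    qed simp
  qed
  show "0 \<le> deriv2 f t" if "0 < t" for t
    by (rule mono_on_imp_deriv_nonneg[OF mono d2[OF that]]) (use that in \<open>simp add: interior_open\<close>)
qed

context setting
begin

lemma c_f_facts:
  fixes f :: "real \<Rightarrow> real"
  assumes d2nn: "\<And>t. 0 < t \<Longrightarrow> 0 \<le> deriv2 f t" and l: "0 \<le> l" "l \<le> 1"
  shows "\<And>t. t \<in> Ival (xi1 n l P Q) (xi2 n l P Q) \<Longrightarrow> c_f f (xi1 n l P Q) (xi2 n l P Q) \<le> deriv2 f t / 2"
    and "0 \<le> c_f f (xi1 n l P Q) (xi2 n l P Q)"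
proof -
  let ?I = "Ival (xi1 n l P Q) (xi2 n l P Q)"
  have bdd: "bdd_below (deriv2 f ` ?I)" by (rule bdd_belowI[of _ 0]) (auto simp: Ival_def d2nn)
  show "c_f f (xi1 n l P Q) (xi2 n l P Q) \<le> deriv2 f t / 2" if "t \<in> ?I" for t
    using cINF_lower[OF bdd that] unfolding c_f_def by simp
  have "0 \<le> (INF t\<in>?I. deriv2 f t)"
    by (rule cINF_greatest) (use one_I[OF l] in \<open>auto simp: Ival_def d2nn\<close>)
  then show "0 \<le> c_f f (xi1 n l P Q) (xi2 n l P Q)" unfolding c_f_def by simp
qed

lemma chi_letter:
  assumes S: "\<forall>i<n. (\<lambda>x. (P i x - Q i x)^2 / Q i x) summable_on UNIV" and i: "i < n"
  shows "chi2 (chan_out (P i) (W i) UNIV) (chan_out (Q i) (W i) UNIV) UNIV \<le> chi2 (P i) (Q i) UNIV"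
    and "0 \<le> chi2 (chan_out (P i) (W i) UNIV) (chan_out (Q i) (W i) UNIV) UNIV"
  by (rule letter_facts(2,3)[where w="W i", OF P_pmf[OF i] P_pos[OF i] Q_pmf[OF i] Q_pos[OF i] W_pmf[OF i]],
      use S i in simp)+

lemma chi_sum_nn:
  assumes S: "\<forall>i<n. (\<lambda>x. (P i x - Q i x)^2 / Q i x) summable_on UNIV"
  shows "0 \<le> chi_sum n P Q W"
  unfolding chi_sum_def by (rule sum_nonneg) (use chi_letter(1)[OF S] in auto)

lemma bracket_ge:
  assumes S: "\<forall>i<n. (\<lambda>x. (P i x - Q i x)^2 / Q i x) summable_on UNIV"
  shows "l^2 * chi_sum n P Q W \<le> chi_bracket n l P Q W"
proof -
  have "(\<Sum>i<n. l^2 * chi2 (P i) (Q i) UNIV - l^2 * chi2 (chan_out (P i) (W i) UNIV) (chan_out (Q i) (W i) UNIV) UNIV)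
      \<le> chi_bracket n l P Q W"
    unfolding chi_bracket_def
    by (rule prod_diff_ge) (use chi_letter[OF S] in \<open>auto intro: mult_left_mono\<close>)
  then show ?thesis by (simp add: chi_sum_def sum_distrib_left algebra_simps)
qed

end

context setting
begin

lemma part_a:
  fixes f :: "real \<Rightarrow> real"
  assumes l: "0 \<le> l" "l \<le> 1"
    and S: "\<forall>i<n. (\<lambda>x. (P i x - Q i x)^2 / Q i x) summable_on UNIV"
    and F: "(\<lambda>xs. prodX n Q xs * f (Rlam n l P Q xs / prodX n Q xs)) summable_on seqs n"
    and cvx: "convex_on {0<..} f"
    and diff: "\<forall>t>0. f differentiable (at t) \<and> deriv f differentiable (at t)"
    and f1: "f 1 = 0"
  shows "c_f f (xi1 n l P Q) (xi2 n l P Q) * chi_bracket n l P Q W \<le> Dgap f n l P Q W"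
proof -
  note DF = deriv_facts[OF cvx diff]
  have cf2: "c_f f (xi1 n l P Q) (xi2 n l P Q) * 2 \<le> deriv2 f t" if "t \<in> Ival (xi1 n l P Q) (xi2 n l P Q)" for t
    using c_f_facts(1)[OF DF(3) l that] by simp
  have "c_f f (xi1 n l P Q) (xi2 n l P Q) *
      (((\<Prod>i<n. 1 + l^2 * chi2 (P i) (Q i) UNIV) - 1)
       - ((\<Prod>i<n. 1 + l^2 * chi2 (chan_out (P i) (W i) UNIV) (chan_out (Q i) (W i) UNIV) UNIV) - 1))
    \<le> (\<Sum>\<^sub>\<infinity>a\<in>seqs n. prodX n Q a * f (Rlam n l P Q a / prodX n Q a))
       - (\<Sum>\<^sub>\<infinity>b\<in>seqs n. chan_out (prodX n Q) (chanN n W) (seqs n) b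
            * f (chan_out (Rlam n l P Q) (chanN n W) (seqs n) b / chan_out (prodX n Q) (chanN n W) (seqs n) b))"
    by (rule core_lower[where lo="xi1 n l P Q" and hi="xi2 n l P Q"])
       (auto intro: q_sum q_pos r_sum[OF l] W_sum W_nnN ratio_I[OF l] one_I[OF l] X_sum[OF l S]
          Y_sum[OF l S] F f1 DF c_f_facts(1)[OF DF(3) l] cf2)
  then show ?thesis by (simp add: Dgap_def fdiv_def chi_bracket_def)
qed

lemma part_b:
  fixes f :: "real \<Rightarrow> real"
  assumes l: "0 \<le> l" "l \<le> 1"
    and S: "\<forall>i<n. (\<lambda>x. (P i x - Q i x)^2 / Q i x) summable_on UNIV"
    and F: "(\<lambda>xs. prodX n Q xs * f (Rlam n l P Q xs / prodX n Q xs)) summable_on seqs n"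
    and ef: "e_f f (xi1 n l P Q) (xi2 n l P Q) < \<infinity>"
    and cvx: "convex_on {0<..} f"
    and diff: "\<forall>t>0. f differentiable (at t) \<and> deriv f differentiable (at t)"
    and f1: "f 1 = 0"
  shows "ereal (Dgap f n l P Q W) \<le> e_f f (xi1 n l P Q) (xi2 n l P Q) * ereal (chi_bracket n l P Q W)"
proof -
  note DF = deriv_facts[OF cvx diff]
  let ?I = "Ival (xi1 n l P Q) (xi2 n l P Q)"
  define E where "E = e_f f (xi1 n l P Q) (xi2 n l P Q)"
  define e where "e = real_of_ereal E"
  have sup: "ereal (deriv2 f t) \<le> (SUP t\<in>?I. ereal (deriv2 f t))" if "t \<in> ?I" for t
    by (rule SUP_upper[OF that])
  have "(0::ereal) \<le> ereal (deriv2 f 1)" using DF(3)[of 1] by simp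
  then have "0 \<le> (SUP t\<in>?I. ereal (deriv2 f t))"
    using sup[OF one_I[OF l]] by (rule order_trans)
  then have E0: "0 \<le> E" unfolding E_def e_f_def by simp
  have Ee: "E = ereal e" using E0 ef unfolding e_def E_def[symmetric] by (cases E) auto
  have et: "deriv2 f t / 2 \<le> e" if "t \<in> ?I" for t
  proof -
    have "ereal (1/2) * ereal (deriv2 f t) \<le> ereal (1/2) * (SUP t\<in>?I. ereal (deriv2 f t))"
      by (rule ereal_mult_left_mono[OF sup[OF that]]) simp
    then have "ereal (deriv2 f t / 2) \<le> E" unfolding E_def e_f_def by simp
    then show ?thesis using Ee by simp
  qed
  have et2: "deriv2 f t \<le> e * 2" if "t \<in> ?I" for t using et[OF that] by simp
  have "(\<Sum>\<^sub>\<infinity>a\<in>seqs n. prodX n Q a * f (Rlam n l P Q a / prodX n Q a))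
       - (\<Sum>\<^sub>\<infinity>b\<in>seqs n. chan_out (prodX n Q) (chanN n W) (seqs n) b
            * f (chan_out (Rlam n l P Q) (chanN n W) (seqs n) b / chan_out (prodX n Q) (chanN n W) (seqs n) b))
    \<le> e * (((\<Prod>i<n. 1 + l^2 * chi2 (P i) (Q i) UNIV) - 1)
       - ((\<Prod>i<n. 1 + l^2 * chi2 (chan_out (P i) (W i) UNIV) (chan_out (Q i) (W i) UNIV) UNIV) - 1))"
    by (rule core_upper[where lo="xi1 n l P Q" and hi="xi2 n l P Q"])
       (auto intro: q_sum q_pos r_sum[OF l] W_sum W_nnN ratio_I[OF l] one_I[OF l] X_sum[OF l S]
          Y_sum[OF l S] F f1 DF et et2)
  then have "Dgap f n l P Q W \<le> e * chi_bracket n l P Q W" by (simp add: Dgap_def fdiv_def chi_bracket_def)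
  then show ?thesis using Ee by (simp add: E_def[symmetric])
qed

end

lemma ev_01: "eventually (\<lambda>l::real. 0 < l \<and> l < 1) (at_right 0)"
  unfolding eventually_at_right_field by (rule exI[of _ 1]) auto

lemma prod_quad_lim:
  fixes a :: "nat \<Rightarrow> real"
  shows "((\<lambda>l. ((\<Prod>i<n. 1 + l^2 * a i) - 1) / l^2) \<longlongrightarrow> (\<Sum>i<n. a i)) (at_right 0)"
proof (induction n)
  case 0 then show ?case by simp
next
  case (Suc n)
  have pl: "((\<lambda>l::real. \<Prod>i<n. 1 + l^2 * a i) \<longlongrightarrow> (\<Prod>i<n. 1 + 0^2 * a i)) (at_right 0)"
    by (intro tendsto_intros)
  have "((\<lambda>l. ((\<Prod>i<n. 1 + l^2 * a i) - 1) / l^2 + a n * (\<Prod>i<n. 1 + l^2 * a i))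
      \<longlongrightarrow> (\<Sum>i<n. a i) + a n * (\<Prod>i<n. 1 + 0^2 * a i)) (at_right 0)"
    by (intro tendsto_add Suc.IH tendsto_mult tendsto_const pl)
  then have lim: "((\<lambda>l. ((\<Prod>i<n. 1 + l^2 * a i) - 1) / l^2 + a n * (\<Prod>i<n. 1 + l^2 * a i))
      \<longlongrightarrow> (\<Sum>i<Suc n. a i)) (at_right 0)" by simp
  have ev: "eventually (\<lambda>l. ((\<Prod>i<n. 1 + l^2 * a i) - 1) / l^2 + a n * (\<Prod>i<n. 1 + l^2 * a i)
      = ((\<Prod>i<Suc n. 1 + l^2 * a i) - 1) / l^2) (at_right (0::real))"
    using eventually_at_right_less[of "0::real"]
    by eventually_elim (simp add: field_simps)
  show ?case using tendsto_cong[OF ev] lim by simp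
qed

lemma isCont_eps:
  fixes g :: "real \<Rightarrow> real"
  assumes "isCont g 1" "0 < e"
  shows "\<exists>d>0. \<forall>t. \<bar>t - 1\<bar> < d \<longrightarrow> \<bar>g t - g 1\<bar> < e"
  using assms unfolding continuous_at_eps_delta dist_real_def by blast

lemma ereal_between:
  fixes S :: ereal
  assumes "ereal a \<le> S" "S \<le> ereal b"
  shows "S = ereal (real_of_ereal S) \<and> a \<le> real_of_ereal S \<and> real_of_ereal S \<le> b"
  using assms by (cases S) auto

context setting
begin

definition "sR i = (SUP x. P i x / Q i x)"
definition "mR i = (INF x. P i x / Q i x)"
definition "loF l = (\<Prod>i<n. 1 - l + l * mR i)"
definition "hiF l = (\<Prod>i<n. 1 - l + l * sR i)"

lemma ratio_le_sR:
  assumes B: "\<forall>i<n. bdd_above (range (\<lambda>x. P i x / Q i x))" and i: "i < n"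
  shows "P i x / Q i x \<le> sR i"
  unfolding sR_def using B i by (auto intro: cSUP_upper)

lemma sR_nn:
  assumes B: "\<forall>i<n. bdd_above (range (\<lambda>x. P i x / Q i x))" and i: "i < n"
  shows "0 \<le> sR i"
proof -
  have "0 \<le> P i undefined / Q i undefined" using P_pos[OF i] Q_pos[OF i] by (simp add: less_imp_le)
  then show ?thesis using ratio_le_sR[OF B i] order_trans by blast
qed

lemma Ival_sub:
  assumes B: "\<forall>i<n. bdd_above (range (\<lambda>x. P i x / Q i x))" and l: "0 \<le> l" "l \<le> 1"
    and t: "t \<in> Ival (xi1 n l P Q) (xi2 n l P Q)"
  shows "loF l \<le> t \<and> t \<le> hiF l"
proof -
  have "xi2 n l P Q \<le> ereal (hiF l)"
    unfolding xi2_def hiF_def prod_ereal[symmetric]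
  proof (rule ereal_prod_mono, rule conjI)
    fix i assume "i \<in> {..<n}"
    then have i: "i < n" by simp
    have sup0: "ereal (P i x / Q i x) \<le> (SUP x. ereal (P i x / Q i x))" for x by (rule SUP_upper) simp
    have "(0::ereal) \<le> ereal (P i undefined / Q i undefined)" using P_pos[OF i] Q_pos[OF i] by (simp add: less_imp_le)
    then have S0: "0 \<le> (SUP x. ereal (P i x / Q i x))" using sup0 order_trans by blast
    show "0 \<le> ereal (1 - l) + ereal l * (SUP x. ereal (P i x / Q i x))"
      using S0 l by (simp add: add_nonneg_nonneg)
    have "(SUP x. ereal (P i x / Q i x)) \<le> ereal (sR i)"
      by (rule SUP_least) (use ratio_le_sR[OF B i] in simp)
    then have "ereal l * (SUP x. ereal (P i x / Q i x)) \<le> ereal l * ereal (sR i)"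
      using l by (intro ereal_mult_left_mono) auto
    then have "ereal (1 - l) + ereal l * (SUP x. ereal (P i x / Q i x)) \<le> ereal (1 - l) + ereal l * ereal (sR i)"
      by (rule add_left_mono)
    then show "ereal (1 - l) + ereal l * (SUP x. ereal (P i x / Q i x)) \<le> ereal (1 - l + l * sR i)" by simp
  qed
  moreover have "ereal t \<le> xi2 n l P Q" using t by (simp add: Ival_def)
  ultimately have "ereal t \<le> ereal (hiF l)" by (rule order_trans[rotated])
  then have "t \<le> hiF l" by simp
  moreover have "ereal (loF l) \<le> ereal t" using t by (simp add: Ival_def xi1_def loF_def mR_def)
  ultimately show ?thesis by simp
qed

lemma loF_lim: "(loF \<longlongrightarrow> 1) (at_right 0)"
proof -
  have "((\<lambda>l. \<Prod>i<n. 1 - l + l * mR i) \<longlongrightarrow> (\<Prod>i<n. 1 - 0 + 0 * mR i)) (at_right 0)"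
    by (intro tendsto_intros)
  then show ?thesis by (simp add: loF_def[abs_def])
qed

lemma hiF_lim: "(hiF \<longlongrightarrow> 1) (at_right 0)"
proof -
  have "((\<lambda>l. \<Prod>i<n. 1 - l + l * sR i) \<longlongrightarrow> (\<Prod>i<n. 1 - 0 + 0 * sR i)) (at_right 0)"
    by (intro tendsto_intros)
  then show ?thesis by (simp add: hiF_def[abs_def])
qed

lemma shrink:
  assumes B: "\<forall>i<n. bdd_above (range (\<lambda>x. P i x / Q i x))" and d: "0 < d"
  shows "eventually (\<lambda>l. 0 < l \<and> l < 1 \<and> (\<forall>t\<in>Ival (xi1 n l P Q) (xi2 n l P Q). \<bar>t - 1\<bar> < d)) (at_right 0)"
proof -
  have e1: "eventually (\<lambda>l. 1 - d < loF l) (at_right 0)" by (rule order_tendstoD(1)[OF loF_lim]) (use d in simp)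
  have e2: "eventually (\<lambda>l. hiF l < 1 + d) (at_right 0)" by (rule order_tendstoD(2)[OF hiF_lim]) (use d in simp)
  show ?thesis using e1 e2 ev_01
  proof eventually_elim
    case (elim l)
    have "\<bar>t - 1\<bar> < d" if "t \<in> Ival (xi1 n l P Q) (xi2 n l P Q)" for t
      using Ival_sub[OF B _ _ that] elim by fastforce
    then show ?case using elim by blast
  qed
qed

lemma c_lim:
  fixes f :: "real \<Rightarrow> real"
  assumes B: "\<forall>i<n. bdd_above (range (\<lambda>x. P i x / Q i x))"
    and C: "isCont (deriv2 f) 1" and d2nn: "\<And>t. 0 < t \<Longrightarrow> 0 \<le> deriv2 f t"
  shows "((\<lambda>l. c_f f (xi1 n l P Q) (xi2 n l P Q)) \<longlongrightarrow> (1/2) * deriv2 f 1) (at_right 0)"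
proof (rule tendstoI)
  fix e :: real assume e: "0 < e"
  obtain d where d: "0 < d" "\<And>t. \<bar>t - 1\<bar> < d \<Longrightarrow> \<bar>deriv2 f t - deriv2 f 1\<bar> < e"
    using isCont_eps[OF C e] by blast
  show "eventually (\<lambda>l. dist (c_f f (xi1 n l P Q) (xi2 n l P Q)) ((1/2) * deriv2 f 1) < e) (at_right 0)"
    using shrink[OF B d(1)]
  proof eventually_elim
    case (elim l)
    let ?I = "Ival (xi1 n l P Q) (xi2 n l P Q)"
    have l: "0 \<le> l" "l \<le> 1" using elim by auto
    have one: "1 \<in> ?I" by (rule one_I[OF l])
    have bdd: "bdd_below (deriv2 f ` ?I)" by (rule bdd_belowI[of _ 0]) (auto simp: Ival_def d2nn)
    have up: "(INF t\<in>?I. deriv2 f t) \<le> deriv2 f 1" by (rule cINF_lower[OF bdd one])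
    have lo: "deriv2 f 1 - e \<le> (INF t\<in>?I. deriv2 f t)"
    proof (rule cINF_greatest)
      show "?I \<noteq> {}" using one by blast
      fix t assume "t \<in> ?I"
      then have "\<bar>deriv2 f t - deriv2 f 1\<bar> < e" using elim d(2) by blast
      then show "deriv2 f 1 - e \<le> deriv2 f t" by simp
    qed
    show ?case using up lo e unfolding c_f_def dist_real_def by (simp add: abs_if)
  qed
qed

lemma e_lim:
  fixes f :: "real \<Rightarrow> real"
  assumes B: "\<forall>i<n. bdd_above (range (\<lambda>x. P i x / Q i x))"
    and C: "isCont (deriv2 f) 1"
  shows "eventually (\<lambda>l. e_f f (xi1 n l P Q) (xi2 n l P Q)
            = ereal (real_of_ereal (e_f f (xi1 n l P Q) (xi2 n l P Q)))) (at_right 0)"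
    and "((\<lambda>l. real_of_ereal (e_f f (xi1 n l P Q) (xi2 n l P Q))) \<longlongrightarrow> (1/2) * deriv2 f 1) (at_right 0)"
proof -
  have main: "eventually (\<lambda>l. e_f f (xi1 n l P Q) (xi2 n l P Q)
            = ereal (real_of_ereal (e_f f (xi1 n l P Q) (xi2 n l P Q)))
       \<and> dist (real_of_ereal (e_f f (xi1 n l P Q) (xi2 n l P Q))) ((1/2) * deriv2 f 1) < e) (at_right 0)"
    if e: "0 < e" for e
  proof -
    obtain d where d: "0 < d" "\<And>t. \<bar>t - 1\<bar> < d \<Longrightarrow> \<bar>deriv2 f t - deriv2 f 1\<bar> < e"
      using isCont_eps[OF C e] by blast
    show ?thesis using shrink[OF B d(1)]
    proof eventually_elim
      case (elim l)
      let ?I = "Ival (xi1 n l P Q) (xi2 n l P Q)"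
      let ?S = "SUP t\<in>?I. ereal (deriv2 f t)"
      have l: "0 \<le> l" "l \<le> 1" using elim by auto
      have one: "1 \<in> ?I" by (rule one_I[OF l])
      have s1: "ereal (deriv2 f 1) \<le> ?S" by (rule SUP_upper[OF one])
      have s2: "?S \<le> ereal (deriv2 f 1 + e)"
      proof (rule SUP_least)
        fix t assume "t \<in> ?I"
        then have "\<bar>deriv2 f t - deriv2 f 1\<bar> < e" using elim d(2) by blast
        then show "ereal (deriv2 f t) \<le> ereal (deriv2 f 1 + e)" by simp
      qed
      obtain r where r: "?S = ereal r" "deriv2 f 1 \<le> r" "r \<le> deriv2 f 1 + e"
        using ereal_between[OF s1 s2] by blast
      have ef: "e_f f (xi1 n l P Q) (xi2 n l P Q) = ereal (r / 2)" unfolding e_f_def r(1) by simp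
      show ?case using r e by (simp add: ef dist_real_def)
    qed
  qed
  show "eventually (\<lambda>l. e_f f (xi1 n l P Q) (xi2 n l P Q)
            = ereal (real_of_ereal (e_f f (xi1 n l P Q) (xi2 n l P Q)))) (at_right 0)"
    using main[of 1] by (auto elim: eventually_mono)
  show "((\<lambda>l. real_of_ereal (e_f f (xi1 n l P Q) (xi2 n l P Q))) \<longlongrightarrow> (1/2) * deriv2 f 1) (at_right 0)"
  proof (rule tendstoI)
    fix e :: real assume "0 < e"
    from main[OF this] show "eventually (\<lambda>l. dist (real_of_ereal (e_f f (xi1 n l P Q) (xi2 n l P Q))) ((1/2) * deriv2 f 1) < e) (at_right 0)"
      by (rule eventually_mono) blast
  qed
qed

end

context setting
begin

lemma S_bdd:
  assumes B: "\<forall>i<n. bdd_above (range (\<lambda>x. P i x / Q i x))"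
  shows "\<forall>i<n. (\<lambda>x. (P i x - Q i x)^2 / Q i x) summable_on UNIV"
proof (intro allI impI)
  fix i assume i: "i < n"
  have g: "(\<lambda>x. (sR i + 1)^2 * Q i x) summable_on UNIV"
    by (rule summable_on_cmult_right) (rule has_sum_imp_summable[OF pmf_has_sum[OF Q_pmf[OF i]]])
  show "(\<lambda>x. (P i x - Q i x)^2 / Q i x) summable_on UNIV"
  proof (rule summable_on_comparison_test[OF g])
    fix x
    define a where "a = P i x / Q i x - 1"
    have a1: "a \<le> sR i - 1" using ratio_le_sR[OF B i, of x] by (simp add: a_def)
    have a2: "-1 < a" using P_pos[OF i, of x] Q_pos[OF i, of x] by (simp add: a_def)
    have s0: "0 \<le> sR i" by (rule sR_nn[OF B i])
    have "0 \<le> (sR i + 1 - a) * (sR i + 1 + a)" by (rule mult_nonneg_nonneg) (use a1 a2 s0 in linarith)+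
    then have "a^2 \<le> (sR i + 1)^2" by (simp add: power2_eq_square algebra_simps)
    then have "Q i x * a^2 \<le> Q i x * (sR i + 1)^2" using Q_pos[OF i, of x] by (simp add: mult_left_mono)
    moreover have "(P i x - Q i x)^2 / Q i x = Q i x * a^2" using sq_id[of "Q i x" "P i x"] by (simp add: a_def)
    ultimately show "(P i x - Q i x)^2 / Q i x \<le> (sR i + 1)^2 * Q i x" by (simp add: mult.commute)
    show "0 \<le> (P i x - Q i x)^2 / Q i x" using Q_pos[OF i, of x] by simp
  qed
qed

lemma F_bdd:
  fixes f :: "real \<Rightarrow> real"
  assumes B: "\<forall>i<n. bdd_above (range (\<lambda>x. P i x / Q i x))"
    and diff: "\<forall>t>0. f differentiable (at t) \<and> deriv f differentiable (at t)"
    and l: "0 \<le> l" "l < 1"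
  shows "(\<lambda>xs. prodX n Q xs * f (Rlam n l P Q xs / prodX n Q xs)) summable_on seqs n"
proof -
  have lo0: "0 < loF l" unfolding loF_def
  proof (rule prod_pos)
    fix i assume "i \<in> {..<n}"
    then have "0 \<le> mR i" using INF_ratio[of i undefined] by (simp add: mR_def)
    then have "0 \<le> l * mR i" using l by simp
    then show "0 < 1 - l + l * mR i" using l by linarith
  qed
  have cont: "continuous_on {loF l..hiF l} f"
  proof (rule continuous_at_imp_continuous_on, rule ballI)
    fix t assume "t \<in> {loF l..hiF l}"
    then have "0 < t" using lo0 by simp
    then have "f differentiable (at t)" using diff by blast
    then show "isCont f t" by (rule differentiable_imp_continuous_within)
  qed
  have "bounded (f ` {loF l..hiF l})" by (rule compact_imp_bounded[OF compact_continuous_image[OF cont compact_Icc]])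
  then obtain M where M: "\<And>t. t \<in> {loF l..hiF l} \<Longrightarrow> \<bar>f t\<bar> \<le> M" unfolding bounded_iff by (auto simp del: atLeastAtMost_iff)
  have g: "Infinite_Sum.abs_summable_on (\<lambda>xs. M * prodX n Q xs) (seqs n)"
  proof -
    have "(\<lambda>xs. M * prodX n Q xs) summable_on seqs n"
      by (rule summable_on_cmult_right) (rule has_sum_imp_summable[OF q_sum])
    then show ?thesis by (rule summable_on_iff_abs_summable_on_real[THEN iffD1])
  qed
  have "Infinite_Sum.abs_summable_on (\<lambda>xs. prodX n Q xs * f (Rlam n l P Q xs / prodX n Q xs)) (seqs n)"
  proof (rule Infinite_Sum.abs_summable_on_comparison_test[OF g])
    fix xs :: "'x list" assume "xs \<in> seqs n"
    have l1: "l \<le> 1" using l by simp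
    have rI: "Rlam n l P Q xs / prodX n Q xs \<in> Ival (xi1 n l P Q) (xi2 n l P Q)" by (rule ratio_I[OF l(1) l1])
    have "loF l \<le> Rlam n l P Q xs / prodX n Q xs \<and> Rlam n l P Q xs / prodX n Q xs \<le> hiF l"
      by (rule Ival_sub[OF B l(1) l1 rI])
    then have "Rlam n l P Q xs / prodX n Q xs \<in> {loF l..hiF l}" by simp
    then have "\<bar>f (Rlam n l P Q xs / prodX n Q xs)\<bar> \<le> M" by (rule M)
    then have a: "prodX n Q xs * \<bar>f (Rlam n l P Q xs / prodX n Q xs)\<bar> \<le> prodX n Q xs * M"
      using q_pos[of xs] by (intro mult_left_mono) auto
    have b: "norm (prodX n Q xs * f (Rlam n l P Q xs / prodX n Q xs)) = prodX n Q xs * \<bar>f (Rlam n l P Q xs / prodX n Q xs)\<bar>"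
      using q_pos[of xs] by (simp add: abs_mult)
    have c: "prodX n Q xs * M \<le> norm (M * prodX n Q xs)" by (simp add: mult.commute)
    show "norm (prodX n Q xs * f (Rlam n l P Q xs / prodX n Q xs)) \<le> norm (M * prodX n Q xs)"
      using a b c by linarith
  qed
  then show ?thesis by (rule summable_on_iff_abs_summable_on_real[THEN iffD2])
qed

lemma L1: "((\<lambda>l. chi_bracket n l P Q W / l^2) \<longlongrightarrow> chi_sum n P Q W) (at_right 0)"
proof -
  have "((\<lambda>l. ((\<Prod>i<n. 1 + l^2 * chi2 (P i) (Q i) UNIV) - 1) / l^2
        - ((\<Prod>i<n. 1 + l^2 * chi2 (chan_out (P i) (W i) UNIV) (chan_out (Q i) (W i) UNIV) UNIV) - 1) / l^2)
      \<longlongrightarrow> (\<Sum>i<n. chi2 (P i) (Q i) UNIV) - (\<Sum>i<n. chi2 (chan_out (P i) (W i) UNIV) (chan_out (Q i) (W i) UNIV) UNIV))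
      (at_right 0)"
    by (intro tendsto_diff prod_quad_lim)
  moreover have "((\<Prod>i<n. 1 + l^2 * chi2 (P i) (Q i) UNIV) - 1) / l^2
        - ((\<Prod>i<n. 1 + l^2 * chi2 (chan_out (P i) (W i) UNIV) (chan_out (Q i) (W i) UNIV) UNIV) - 1) / l^2
      = chi_bracket n l P Q W / l^2" for l
    unfolding chi_bracket_def by (simp add: diff_divide_distrib)
  ultimately show ?thesis by (simp add: chi_sum_def sum_subtractf)
qed

end

context setting
begin

lemma part_c:
  fixes f :: "real \<Rightarrow> real"
  assumes cvx: "convex_on {0<..} f"
    and diff: "\<forall>t>0. f differentiable (at t) \<and> deriv f differentiable (at t)"
    and f1: "f 1 = 0"
    and C: "isCont (deriv2 f) 1"
    and B: "\<forall>i<n. bdd_above (range (\<lambda>x. P i x / Q i x))"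
  shows "((\<lambda>l. Dgap f n l P Q W / l\<^sup>2)
              \<longlongrightarrow> (1/2) * deriv2 f 1 * chi_sum n P Q W) (at_right 0)
        \<and> ((\<lambda>l. c_f f (xi1 n l P Q) (xi2 n l P Q) * chi_bracket n l P Q W / l\<^sup>2)
              \<longlongrightarrow> (1/2) * deriv2 f 1 * chi_sum n P Q W) (at_right 0)
        \<and> ((\<lambda>l. c_f f (xi1 n l P Q) (xi2 n l P Q) * l\<^sup>2 * chi_sum n P Q W / l\<^sup>2)
              \<longlongrightarrow> (1/2) * deriv2 f 1 * chi_sum n P Q W) (at_right 0)
        \<and> ((\<lambda>l. e_f f (xi1 n l P Q) (xi2 n l P Q) * ereal (chi_bracket n l P Q W / l\<^sup>2))
              \<longlongrightarrow> ereal ((1/2) * deriv2 f 1 * chi_sum n P Q W)) (at_right 0)"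
proof -
  note DF = deriv_facts[OF cvx diff]
  define c where "c = (\<lambda>l. c_f f (xi1 n l P Q) (xi2 n l P Q))"
  define E where "E = (\<lambda>l. real_of_ereal (e_f f (xi1 n l P Q) (xi2 n l P Q)))"
  define cb where "cb = (\<lambda>l. chi_bracket n l P Q W)"
  define T where "T = (1/2) * deriv2 f 1 * chi_sum n P Q W"
  have cl: "(c \<longlongrightarrow> (1/2) * deriv2 f 1) (at_right 0)" unfolding c_def by (rule c_lim[OF B C DF(3)])
  have El: "(E \<longlongrightarrow> (1/2) * deriv2 f 1) (at_right 0)" unfolding E_def by (rule e_lim(2)[OF B C])
  have Eev: "eventually (\<lambda>l. e_f f (xi1 n l P Q) (xi2 n l P Q) = ereal (E l)) (at_right 0)"
    unfolding E_def by (rule e_lim(1)[OF B C])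
  have L: "((\<lambda>l. cb l / l^2) \<longlongrightarrow> chi_sum n P Q W) (at_right 0)" unfolding cb_def by (rule L1)
  have lim2: "((\<lambda>l. c l * (cb l / l^2)) \<longlongrightarrow> T) (at_right 0)"
    unfolding T_def by (rule tendsto_mult[OF cl L])
  have limE: "((\<lambda>l. E l * (cb l / l^2)) \<longlongrightarrow> T) (at_right 0)"
    unfolding T_def by (rule tendsto_mult[OF El L])
  have S: "\<forall>i<n. (\<lambda>x. (P i x - Q i x)^2 / Q i x) summable_on UNIV" by (rule S_bdd[OF B])
  have sand: "eventually (\<lambda>l. c l * (cb l / l^2) \<le> Dgap f n l P Q W / l^2
      \<and> Dgap f n l P Q W / l^2 \<le> E l * (cb l / l^2)) (at_right 0)"
    using ev_01 Eev
  proof eventually_elim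
    case (elim l)
    have l: "0 \<le> l" "l \<le> 1" using elim by auto
    have F: "(\<lambda>xs. prodX n Q xs * f (Rlam n l P Q xs / prodX n Q xs)) summable_on seqs n"
      by (rule F_bdd[OF B diff]) (use elim in auto)
    have a: "c l * cb l \<le> Dgap f n l P Q W"
      unfolding c_def cb_def by (rule part_a[OF l S F cvx diff f1])
    have "ereal (Dgap f n l P Q W) \<le> e_f f (xi1 n l P Q) (xi2 n l P Q) * ereal (chi_bracket n l P Q W)"
      by (rule part_b[OF l S F _ cvx diff f1]) (use elim in simp)
    then have b: "Dgap f n l P Q W \<le> E l * cb l" using elim by (simp add: cb_def)
    have l2: "0 \<le> l^2" by simp
    have "c l * cb l / l^2 \<le> Dgap f n l P Q W / l^2" by (rule divide_right_mono[OF a l2])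
    moreover have "Dgap f n l P Q W / l^2 \<le> E l * cb l / l^2" by (rule divide_right_mono[OF b l2])
    ultimately show ?case by simp
  qed
  have lim1: "((\<lambda>l. Dgap f n l P Q W / l\<^sup>2) \<longlongrightarrow> T) (at_right 0)"
  proof (rule tendsto_sandwich[OF _ _ lim2 limE])
    show "eventually (\<lambda>l. c l * (cb l / l^2) \<le> Dgap f n l P Q W / l\<^sup>2) (at_right 0)"
      using sand by (rule eventually_mono) (rule conjunct1)
    show "eventually (\<lambda>l. Dgap f n l P Q W / l\<^sup>2 \<le> E l * (cb l / l^2)) (at_right 0)"
      using sand by (rule eventually_mono) (rule conjunct2)
  qed
  have lim3: "((\<lambda>l. c l * l\<^sup>2 * chi_sum n P Q W / l\<^sup>2) \<longlongrightarrow> T) (at_right 0)"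
  proof -
    have lim: "((\<lambda>l. c l * chi_sum n P Q W) \<longlongrightarrow> T) (at_right 0)"
      unfolding T_def by (rule tendsto_mult[OF cl tendsto_const])
    have ev: "eventually (\<lambda>l. c l * chi_sum n P Q W = c l * l\<^sup>2 * chi_sum n P Q W / l\<^sup>2) (at_right 0)"
      using eventually_at_right_less[of "0::real"] by eventually_elim simp
    show ?thesis by (rule tendsto_cong[OF ev, THEN iffD1, OF lim])
  qed
  have lim4: "((\<lambda>l. e_f f (xi1 n l P Q) (xi2 n l P Q) * ereal (cb l / l\<^sup>2)) \<longlongrightarrow> ereal T) (at_right 0)"
  proof -
    have lim: "((\<lambda>l. ereal (E l * (cb l / l^2))) \<longlongrightarrow> ereal T) (at_right 0)" by (rule tendsto_ereal[OF limE])
    have ev: "eventually (\<lambda>l. ereal (E l * (cb l / l^2)) = e_f f (xi1 n l P Q) (xi2 n l P Q) * ereal (cb l / l\<^sup>2)) (at_right 0)"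
      using Eev by eventually_elim simp
    show ?thesis by (rule tendsto_cong[OF ev, THEN iffD1, OF lim])
  qed
  have lim2': "((\<lambda>l. c_f f (xi1 n l P Q) (xi2 n l P Q) * chi_bracket n l P Q W / l\<^sup>2) \<longlongrightarrow> T) (at_right 0)"
    using lim2 unfolding c_def cb_def by simp
  show ?thesis using lim1 lim2' lim3 lim4 unfolding T_def c_def cb_def by (intro conjI)
qed

end

theorem theorem2:
  fixes P Q :: "nat \<Rightarrow> 'x::countable \<Rightarrow> real"
    and W :: "nat \<Rightarrow> 'x \<Rightarrow> 'y::countable \<Rightarrow> real"
    and n :: nat
    and f :: "real \<Rightarrow> real"
  assumes pmfP: "\<forall>i<n. is_pmf (P i) \<and> (\<forall>x. 0 < P i x)"
    and pmfQ: "\<forall>i<n. is_pmf (Q i) \<and> (\<forall>x. 0 < Q i x)"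
    and chan: "\<forall>i<n. \<forall>x. is_pmf (W i x)"
    and cvx: "convex_on {0<..} f"
    and diff: "\<forall>t>0. f differentiable (at t) \<and> deriv f differentiable (at t)"
    and f1: "f 1 = 0"
  shows
    "(\<forall>l\<in>{0..1}.
        ((\<forall>i<n. (\<lambda>x. (P i x - Q i x)\<^sup>2 / Q i x) summable_on UNIV)
         \<and> (\<lambda>xs. prodX n Q xs * f (Rlam n l P Q xs / prodX n Q xs)) summable_on seqs n)
        \<longrightarrow>
          Dgap f n l P Q W \<ge> c_f f (xi1 n l P Q) (xi2 n l P Q) * chi_bracket n l P Q W
        \<and> c_f f (xi1 n l P Q) (xi2 n l P Q) * chi_bracket n l P Q W
            \<ge> c_f f (xi1 n l P Q) (xi2 n l P Q) * l\<^sup>2 * chi_sum n P Q W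
        \<and> c_f f (xi1 n l P Q) (xi2 n l P Q) * l\<^sup>2 * chi_sum n P Q W \<ge> 0)
   \<and> (\<forall>l\<in>{0..1}.
        ((\<forall>i<n. (\<lambda>x. (P i x - Q i x)\<^sup>2 / Q i x) summable_on UNIV)
         \<and> (\<lambda>xs. prodX n Q xs * f (Rlam n l P Q xs / prodX n Q xs)) summable_on seqs n
         \<and> e_f f (xi1 n l P Q) (xi2 n l P Q) < \<infinity>)
        \<longrightarrow>
          ereal (Dgap f n l P Q W)
            \<le> e_f f (xi1 n l P Q) (xi2 n l P Q) * ereal (chi_bracket n l P Q W))
   \<and> ((isCont (deriv2 f) 1 \<and> (\<forall>i<n. bdd_above (range (\<lambda>x. P i x / Q i x))))
      \<longrightarrow>
          ((\<lambda>l. Dgap f n l P Q W / l\<^sup>2)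
              \<longlongrightarrow> (1/2) * deriv2 f 1 * chi_sum n P Q W) (at_right 0)
        \<and> ((\<lambda>l. c_f f (xi1 n l P Q) (xi2 n l P Q) * chi_bracket n l P Q W / l\<^sup>2)
              \<longlongrightarrow> (1/2) * deriv2 f 1 * chi_sum n P Q W) (at_right 0)
        \<and> ((\<lambda>l. c_f f (xi1 n l P Q) (xi2 n l P Q) * l\<^sup>2 * chi_sum n P Q W / l\<^sup>2)
              \<longlongrightarrow> (1/2) * deriv2 f 1 * chi_sum n P Q W) (at_right 0)
        \<and> ((\<lambda>l. e_f f (xi1 n l P Q) (xi2 n l P Q) * ereal (chi_bracket n l P Q W / l\<^sup>2))
              \<longlongrightarrow> ereal ((1/2) * deriv2 f 1 * chi_sum n P Q W)) (at_right 0))"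
proof -
  interpret setting P Q W n using pmfP pmfQ chan by (rule setting.intro)
  note DF = deriv_facts[OF cvx diff]
  show ?thesis
  proof (intro conjI)
    show "\<forall>l\<in>{0..1}.
        ((\<forall>i<n. (\<lambda>x. (P i x - Q i x)\<^sup>2 / Q i x) summable_on UNIV)
         \<and> (\<lambda>xs. prodX n Q xs * f (Rlam n l P Q xs / prodX n Q xs)) summable_on seqs n)
        \<longrightarrow>
          Dgap f n l P Q W \<ge> c_f f (xi1 n l P Q) (xi2 n l P Q) * chi_bracket n l P Q W
        \<and> c_f f (xi1 n l P Q) (xi2 n l P Q) * chi_bracket n l P Q W
            \<ge> c_f f (xi1 n l P Q) (xi2 n l P Q) * l\<^sup>2 * chi_sum n P Q W
        \<and> c_f f (xi1 n l P Q) (xi2 n l P Q) * l\<^sup>2 * chi_sum n P Q W \<ge> 0"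
    proof (intro ballI impI)
      fix l :: real assume "l \<in> {0..1}"
      then have l: "0 \<le> l" "l \<le> 1" by auto
      assume H: "(\<forall>i<n. (\<lambda>x. (P i x - Q i x)\<^sup>2 / Q i x) summable_on UNIV)
         \<and> (\<lambda>xs. prodX n Q xs * f (Rlam n l P Q xs / prodX n Q xs)) summable_on seqs n"
      have S: "\<forall>i<n. (\<lambda>x. (P i x - Q i x)\<^sup>2 / Q i x) summable_on UNIV" using H by blast
      have F: "(\<lambda>xs. prodX n Q xs * f (Rlam n l P Q xs / prodX n Q xs)) summable_on seqs n" using H by blast
      have c0: "0 \<le> c_f f (xi1 n l P Q) (xi2 n l P Q)" by (rule c_f_facts(2)[OF DF(3) l])
      have 1: "c_f f (xi1 n l P Q) (xi2 n l P Q) * chi_bracket n l P Q W \<le> Dgap f n l P Q W"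
        by (rule part_a[OF l S F cvx diff f1])
      have "c_f f (xi1 n l P Q) (xi2 n l P Q) * (l\<^sup>2 * chi_sum n P Q W)
          \<le> c_f f (xi1 n l P Q) (xi2 n l P Q) * chi_bracket n l P Q W"
        by (rule mult_left_mono[OF bracket_ge[OF S] c0])
      then have 2: "c_f f (xi1 n l P Q) (xi2 n l P Q) * l\<^sup>2 * chi_sum n P Q W
          \<le> c_f f (xi1 n l P Q) (xi2 n l P Q) * chi_bracket n l P Q W" by (simp add: mult.assoc)
      have 3: "0 \<le> c_f f (xi1 n l P Q) (xi2 n l P Q) * l\<^sup>2 * chi_sum n P Q W"
        using c0 chi_sum_nn[OF S] by simp
      show "Dgap f n l P Q W \<ge> c_f f (xi1 n l P Q) (xi2 n l P Q) * chi_bracket n l P Q W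
        \<and> c_f f (xi1 n l P Q) (xi2 n l P Q) * chi_bracket n l P Q W
            \<ge> c_f f (xi1 n l P Q) (xi2 n l P Q) * l\<^sup>2 * chi_sum n P Q W
        \<and> c_f f (xi1 n l P Q) (xi2 n l P Q) * l\<^sup>2 * chi_sum n P Q W \<ge> 0"
        using 1 2 3 by blast
    qed
    show "\<forall>l\<in>{0..1}.
        ((\<forall>i<n. (\<lambda>x. (P i x - Q i x)\<^sup>2 / Q i x) summable_on UNIV)
         \<and> (\<lambda>xs. prodX n Q xs * f (Rlam n l P Q xs / prodX n Q xs)) summable_on seqs n
         \<and> e_f f (xi1 n l P Q) (xi2 n l P Q) < \<infinity>)
        \<longrightarrow>
          ereal (Dgap f n l P Q W)
            \<le> e_f f (xi1 n l P Q) (xi2 n l P Q) * ereal (chi_bracket n l P Q W)"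
    proof (intro ballI impI)
      fix l :: real assume "l \<in> {0..1}"
      then have l: "0 \<le> l" "l \<le> 1" by auto
      assume H: "(\<forall>i<n. (\<lambda>x. (P i x - Q i x)\<^sup>2 / Q i x) summable_on UNIV)
         \<and> (\<lambda>xs. prodX n Q xs * f (Rlam n l P Q xs / prodX n Q xs)) summable_on seqs n
         \<and> e_f f (xi1 n l P Q) (xi2 n l P Q) < \<infinity>"
      have S: "\<forall>i<n. (\<lambda>x. (P i x - Q i x)\<^sup>2 / Q i x) summable_on UNIV" using H by blast
      have F: "(\<lambda>xs. prodX n Q xs * f (Rlam n l P Q xs / prodX n Q xs)) summable_on seqs n" using H by blast
      have E: "e_f f (xi1 n l P Q) (xi2 n l P Q) < \<infinity>" using H by blast
      show "ereal (Dgap f n l P Q W) \<le> e_f f (xi1 n l P Q) (xi2 n l P Q) * ereal (chi_bracket n l P Q W)"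
        by (rule part_b[OF l S F E cvx diff f1])
    qed
    show "(isCont (deriv2 f) 1 \<and> (\<forall>i<n. bdd_above (range (\<lambda>x. P i x / Q i x))))
      \<longrightarrow>
          ((\<lambda>l. Dgap f n l P Q W / l\<^sup>2)
              \<longlongrightarrow> (1/2) * deriv2 f 1 * chi_sum n P Q W) (at_right 0)
        \<and> ((\<lambda>l. c_f f (xi1 n l P Q) (xi2 n l P Q) * chi_bracket n l P Q W / l\<^sup>2)
              \<longlongrightarrow> (1/2) * deriv2 f 1 * chi_sum n P Q W) (at_right 0)
        \<and> ((\<lambda>l. c_f f (xi1 n l P Q) (xi2 n l P Q) * l\<^sup>2 * chi_sum n P Q W / l\<^sup>2)
              \<longlongrightarrow> (1/2) * deriv2 f 1 * chi_sum n P Q W) (at_right 0)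
        \<and> ((\<lambda>l. e_f f (xi1 n l P Q) (xi2 n l P Q) * ereal (chi_bracket n l P Q W / l\<^sup>2))
              \<longlongrightarrow> ereal ((1/2) * deriv2 f 1 * chi_sum n P Q W)) (at_right 0)"
    proof (intro impI)
      assume H: "isCont (deriv2 f) 1 \<and> (\<forall>i<n. bdd_above (range (\<lambda>x. P i x / Q i x)))"
      show "((\<lambda>l. Dgap f n l P Q W / l\<^sup>2)
              \<longlongrightarrow> (1/2) * deriv2 f 1 * chi_sum n P Q W) (at_right 0)
        \<and> ((\<lambda>l. c_f f (xi1 n l P Q) (xi2 n l P Q) * chi_bracket n l P Q W / l\<^sup>2)
              \<longlongrightarrow> (1/2) * deriv2 f 1 * chi_sum n P Q W) (at_right 0)
        \<and> ((\<lambda>l. c_f f (xi1 n l P Q) (xi2 n l P Q) * l\<^sup>2 * chi_sum n P Q W / l\<^sup>2)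
              \<longlongrightarrow> (1/2) * deriv2 f 1 * chi_sum n P Q W) (at_right 0)
        \<and> ((\<lambda>l. e_f f (xi1 n l P Q) (xi2 n l P Q) * ereal (chi_bracket n l P Q W / l\<^sup>2))
              \<longlongrightarrow> ereal ((1/2) * deriv2 f 1 * chi_sum n P Q W)) (at_right 0)"
        by (rule part_c[OF cvx diff f1 conjunct1[OF H] conjunct2[OF H]])
    qed
  qed
qed


end
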